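(* Let $A$ be an $\mathcal{E}$-algebra. For any $i \geq 0$ the map $\zeta_i$ in $\mathrm{Hom}(A \otimes A, A)$ defined by \begin{equation*} \zeta_i(\alpha \otimes \beta) = (H_1 + H_{2})(\tilde{x}_i)(\alpha \otimes \alpha \otimes \beta \otimes \beta) \end{equation*} is a Cartan $i$-coboundary, i.e. \begin{equation*} (\partial \zeta_i)(\alpha \otimes \beta) = (\alpha \cup_0 \beta) \cup_i (\alpha \cup_0 \beta) + \sum_{i=j+k} (\alpha \cup_j \alpha) \cup_0 (\beta \cup_k \beta). \end{equation*}
   Context: All constructions are over $\mathbb F_2$. $\mathcal E$ denotes the Barratt-Eccles operad: $\mathcal E(r) = N_*(E(r))$, the normalized chains of the simplicial set $E(r)$ whose $n$-simplices are tuples $(\sigma_0,\dots,\sigma_n)$ of permutations in $\Sigma_r$ (faces delete, degeneracies repeat an entry), with $\Sigma_r$ acting by left multiplication on each entry, and operadic composition $\circ_{\mathcal E} = N_*(\circ_E)\circ EZ^r$, where $\circ_E$ applies composition of permutations $\circ_\Sigma$ coordinatewise and $EZ$ is the Eilenberg-Zilber map. An $\mathcal E$-algebra $A$ is an operad morphism $\mathcal E \to \mathrm{End}(A)$; elements of $\mathcal E$ are identified with their images, and $\partial$ on $\mathrm{Hom}$ complexes is $\partial f = \partial\circ f + f\circ\partial$. Let $\tilde{x}_i = (e, (12), e, \dots, (12)^i) \in \mathcal E(2)_i$ and $\alpha \cup_i \beta := \tilde{x}_i(\alpha \otimes \beta)$ (the cup-$i$ product). Let $f, g : \Sigma_2 \to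 \Sigma_4$ be the homomorphisms with $f(12) = (13)(24)$ and $g(12) = (12)(34)$. Define degree-$1$ maps $H_1, H_2 : \mathcal E(2) \to \mathcal E(4)$ on basis elements by $H_1(\sigma_0,\dots,\sigma_n) = \sum_{i=0}^n \big((23)f\sigma_0, \dots, (23)f\sigma_i, g\sigma_i, \dots, g\sigma_n\big)$ and $H_2(\sigma_0,\dots,\sigma_n) = N_*(\circ_E)\big((e,\dots,e) \otimes SHI(\sigma_0,\dots,\sigma_n)^{\otimes 2}\big)$, where $SHI : N_*(E(2)\times E(2)) \to N_{*+1}(E(2)\times E(2))$ is the Shih homotopy (an explicit chain homotopy with $\partial SHI = EZ\circ AW + \mathrm{id}$) applied to the diagonal simplex $(\sigma_0,\dots,\sigma_n)\times(\sigma_0,\dots,\sigma_n)$, and the resulting chain of $E(2)\times E(2)$ is composed with the constant simplex $(e,\dots,e)\in E(2)$ via $\circ_E : E(2)\times E(2)\times E(2)\to E(4)$. *)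

theory Defs
  imports Main
begin

text \<open>A permutation in Sigma_r is the list [s 0, ..., s (r-1)] of its values.\<close>

type_synonym perm = "nat list"
type_synonym simp = "perm list"    \<comment> \<open>an n-simplex (s_0,...,s_n) of E(r)\<close>
type_synonym chain = "simp list"   \<comment> \<open>a formal F2-sum of simplices\<close>

definition is_perm :: "nat \<Rightarrow> perm \<Rightarrow> bool" where
  "is_perm r p \<longleftrightarrow> distinct p \<and> set p = {..<r}"

definition pcomp :: "perm \<Rightarrow> perm \<Rightarrow> perm" where
  "pcomp p q = map (\<lambda>k. p ! k) q"

text \<open>Operadic composition of permutations gamma(s; t_0,...,t_(r-1)) (block permutation).\<close>
definition perm_gamma :: "perm \<Rightarrow> perm list \<Rightarrow> perm" where
  "perm_gamma s ts = concat (map (\<lambda>v. map (\<lambda>t. sum_list (map length (take v ts)) + t) (ts ! v)) s)"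

definition is_simp :: "nat \<Rightarrow> simp \<Rightarrow> bool" where
  "is_simp r s \<longleftrightarrow> s \<noteq> [] \<and> (\<forall>p\<in>set s. is_perm r p)"

definition arity :: "simp \<Rightarrow> nat" where
  "arity s = length (hd s)"

definition degenerate :: "'x list \<Rightarrow> bool" where
  "degenerate s \<longleftrightarrow> (\<exists>k. Suc k < length s \<and> s ! k = s ! Suc k)"

definition face :: "nat \<Rightarrow> 'x list \<Rightarrow> 'x list" where
  "face j s = take j s @ drop (Suc j) s"

definition degen :: "nat \<Rightarrow> 'x list \<Rightarrow> 'x list" where
  "degen j s = take (Suc j) s @ drop j s"

text \<open>degens [j_1,...,j_k] s = s_(j_k) ... s_(j_1) s  (j_1 applied first).\<close>
definition degens :: "nat list \<Rightarrow> 'x list \<Rightarrow> 'x list" where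
  "degens js s = foldl (\<lambda>t j. degen j t) s js"

definition bd :: "'x list \<Rightarrow> 'x list list" where
  "bd s = (if length s \<le> 1 then [] else map (\<lambda>j. face j s) [0..<length s])"

definition lmul :: "perm \<Rightarrow> simp \<Rightarrow> simp" where
  "lmul g s = map (pcomp g) s"

text \<open>EZ of a p-simplex and a q-simplex: the (p+q)-simplices of the product given by all
  (p,q)-shuffles (staircase paths), as lists of pairs of vertices. Signs vanish over F2.\<close>
fun ez2 :: "'x list \<Rightarrow> 'y list \<Rightarrow> ('x \<times> 'y) list list" where
  "ez2 [] ys = []"
| "ez2 xs [] = []"
| "ez2 [x] ys = [map (Pair x) ys]"
| "ez2 xs [y] = [map (\<lambda>x. (x, y)) xs]"
| "ez2 (x # x' # xs) (y # y' # ys) =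
     map (Cons (x, y)) (ez2 (x' # xs) (y # y' # ys) @ ez2 (x # x' # xs) (y' # ys))"

text \<open>Iterated EZ on a list of simplices; result simplices have tuples (lists) as vertices.\<close>
fun ezm :: "'x list list \<Rightarrow> 'x list list list" where
  "ezm [] = [[[]]]"
| "ezm (x # xs) = concat (map (\<lambda>z. map (map (\<lambda>(a, t). a # t)) (ez2 x z)) (ezm xs))"

text \<open>Operadic composition of E: N_*(circ_E) composed with EZ.\<close>
definition compE :: "simp \<Rightarrow> simp list \<Rightarrow> chain" where
  "compE x ys = map (map (\<lambda>t. perm_gamma (hd t) (tl t))) (ezm (x # ys))"

definition actC :: "(simp \<Rightarrow> 'a::ab_group_add list \<Rightarrow> 'a) \<Rightarrow> chain \<Rightarrow> 'a list \<Rightarrow> 'a" where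
  "actC act c xs = sum_list (map (\<lambda>s. act s xs) c)"

text \<open>Differential on Hom(A^{\<otimes> r}, A): (\<partial>F) = d o F + F o d (no signs over F2).\<close>
definition homd :: "('a::ab_group_add \<Rightarrow> 'a) \<Rightarrow> ('a list \<Rightarrow> 'a) \<Rightarrow> 'a list \<Rightarrow> 'a" where
  "homd d F xs = d (F xs) + (\<Sum>k<length xs. F (xs[k := d (xs ! k)]))"

text \<open>An E-algebra: an F2-chain complex (A,d) with an operad morphism E \<rightarrow> End(A); a basis
  simplex s of E(r) acts as the multilinear map act s : A^r \<rightarrow> A.\<close>
definition E_algebra :: "('a::ab_group_add \<Rightarrow> 'a) \<Rightarrow> (simp \<Rightarrow> 'a list \<Rightarrow> 'a) \<Rightarrow> bool" where
  "E_algebra d act \<longleftrightarrow>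
     (\<forall>x::'a. x + x = 0) \<and>
     (\<forall>x y. d (x + y) = d x + d y) \<and>
     (\<forall>x. d (d x) = 0) \<and>
     (\<forall>r s xs k y z. is_simp r s \<and> length xs = r \<and> k < r \<longrightarrow>
        act s (xs[k := y + z]) = act s (xs[k := y]) + act s (xs[k := z])) \<and>
     (\<forall>r s xs. is_simp r s \<and> degenerate s \<and> length xs = r \<longrightarrow> act s xs = 0) \<and>
     (\<forall>r s xs. is_simp r s \<and> length xs = r \<longrightarrow> homd d (act s) xs = actC act (bd s) xs) \<and>
     (\<forall>r g s xs. is_perm r g \<and> is_simp r s \<and> length xs = r \<longrightarrow>
        act (lmul g s) xs = act s (map (\<lambda>k. xs ! (g ! k)) [0..<r])) \<and>
     (\<forall>x ys xs. ys \<noteq> [] \<and> is_simp (length ys) x \<and>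
        (\<forall>y\<in>set ys. 1 \<le> arity y \<and> is_simp (arity y) y) \<and>
        length xs = sum_list (map arity ys) \<longrightarrow>
        actC act (compE x ys) xs =
          act x (map (\<lambda>k. act (ys ! k)
                    (take (arity (ys ! k)) (drop (sum_list (map arity (take k ys))) xs)))
                 [0..<length ys])) \<and>
     (\<forall>x. act [[0]] [x] = x)"

definition xt :: "nat \<Rightarrow> simp" where
  "xt i = map (\<lambda>k. if even k then [0, 1] else [1, 0]) [0..<Suc i]"

definition cup :: "(simp \<Rightarrow> 'a list \<Rightarrow> 'a) \<Rightarrow> nat \<Rightarrow> 'a \<Rightarrow> 'a \<Rightarrow> 'a" where
  "cup act i a b = act (xt i) [a, b]"

text \<open>f, g : Sigma_2 \<rightarrow> Sigma_4 with f(12) = (13)(24), g(12) = (12)(34) (0-indexed one-line).\<close>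
definition fS :: "perm \<Rightarrow> perm" where
  "fS s = (if s = [1, 0] then [2, 3, 0, 1] else [0, 1, 2, 3])"

definition gS :: "perm \<Rightarrow> perm" where
  "gS s = (if s = [1, 0] then [1, 0, 3, 2] else [0, 1, 2, 3])"

definition t23 :: perm where
  "t23 = [0, 2, 1, 3]"

definition H1 :: "simp \<Rightarrow> chain" where
  "H1 s = map (\<lambda>i. map (\<lambda>p. pcomp t23 (fS p)) (take (Suc i) s) @ map gS (drop i s))
             [0..<length s]"

text \<open>The Shih homotopy on N_*(X \<times> Y) (mod 2), applied to an m-simplex (a, b):
  sum over 0 \<le> q \<le> m-1, 0 \<le> p \<le> m-q-1 and (p+1,q)-shuffles (al, be) of {0..p+q}, with mb = m-p-q, of
  (s_(be+mb) s_(mb-1) d_(m-q+1)...d_m a,  s_(al+mb) d_mb ... d_(m-q-1) b).\<close>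
definition shi :: "'x list \<times> 'y list \<Rightarrow> ('x list \<times> 'y list) list" where
  "shi ab = (let a = fst ab; b = snd ab; m = length a - 1 in
     concat (map (\<lambda>q. concat (map (\<lambda>p. let mb = m - p - q in
        map (\<lambda>al. let be = filter (\<lambda>k. k \<notin> set al) [0..<p + q + 1] in
               (degens (map (\<lambda>k. k + mb) be) (degen (mb - 1) (take (m - q + 1) a)),
                degens (map (\<lambda>k. k + mb) al) (take mb b @ drop (m - q) b)))
          (filter (\<lambda>al. length al = p + 1) (subseqs [0..<p + q + 1])))
       [0..<m - q])) [0..<m]))"

definition H2 :: "simp \<Rightarrow> chain" where
  "H2 s = map (\<lambda>(u, v). map (\<lambda>(e, a, b). perm_gamma e [a, b])
                         (zip (replicate (length u) [0, 1]) (zip u v)))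
            (shi (s, s))"

text \<open>zeta_i as a 4-ary operation: (H1 + H2)(x~_i) acting on A^{\<otimes> 4}; zeta_i(a \<otimes> b) is
  zeta_op act i [a, a, b, b].\<close>
definition zeta_op :: "(simp \<Rightarrow> 'a::ab_group_add list \<Rightarrow> 'a) \<Rightarrow> nat \<Rightarrow> 'a list \<Rightarrow> 'a" where
  "zeta_op act i = actC act (H1 (xt i) @ H2 (xt i))"

end

theory Submission
  imports Defs
begin

type_synonym letter = "bool \<times> bool"
type_synonym word = "letter list"

definition mrg :: "letter \<Rightarrow> letter \<Rightarrow> letter" where
  "mrg x y = (fst x \<noteq> fst y, snd x \<noteq> snd y)"

fun wfs :: "word \<Rightarrow> word list" where
  "wfs [] = []"
| "wfs [l] = [[], []]"
| "wfs (l # l' # w) = (l' # w) # (mrg l l' # w) # map (Cons l) (tl (wfs (l' # w)))"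

definition sv :: "(word \<Rightarrow> 'a::ab_group_add) \<Rightarrow> word list \<Rightarrow> 'a" where
  "sv V X = sum_list (map V X)"

fun allw :: "nat \<Rightarrow> word list" where
  "allw 0 = [[]]"
| "allw (Suc n) = map (Cons (True, False)) (allw n) @ map (Cons (False, True)) (allw n)"

definition cnta :: "word \<Rightarrow> nat" where
  "cnta w = length (filter (\<lambda>l. l = (True, False)) w)"

definition ow :: "nat \<Rightarrow> word list" where
  "ow n = filter (\<lambda>w. odd (cnta w)) (allw n)"
definition ew :: "nat \<Rightarrow> word list" where
  "ew n = filter (\<lambda>w. even (cnta w)) (allw n)"
definition kw :: "nat \<Rightarrow> nat \<Rightarrow> word list" where
  "kw k n = filter (\<lambda>w. cnta w = k) (allw n)"

fun SS :: "nat \<Rightarrow> word list" where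
  "SS 0 = []"
| "SS (Suc n) = map (Cons (False, True)) (ow (Suc n)) @ map (Cons (True, True)) (SS n)"

definition Dv :: "(word \<Rightarrow> 'a::ab_group_add) \<Rightarrow> word \<Rightarrow> 'a" where
  "Dv V w = sv V (tl (wfs w))"
definition dV :: "(word \<Rightarrow> 'a::ab_group_add) \<Rightarrow> word \<Rightarrow> 'a" where
  "dV V w = sv V (wfs w)"

definition zv :: "(word \<Rightarrow> 'a::ab_group_add) \<Rightarrow> bool" where
  "zv V \<longleftrightarrow> (\<forall>w. (False, False) \<in> set w \<longrightarrow> V w = 0)"

lemma sv_append[simp]: "sv V (X @ Y) = sv V X + sv V Y"
  by (simp add: sv_def)
lemma sv_Cons[simp]: "sv V (x # X) = V x + sv V X"
  by (simp add: sv_def)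
lemma sv_Nil[simp]: "sv V [] = 0"
  by (simp add: sv_def)
lemma sv_map[simp]: "sv V (map f X) = sv (\<lambda>w. V (f w)) X"
  by (simp add: sv_def o_def)
lemma sv_add: "sv (\<lambda>w. F w + G w) X = sv F X + sv G X"
  by (induct X) (simp_all add: ac_simps)
lemma sv_zero: "sv (\<lambda>w. 0) X = 0"
  by (induct X) simp_all
lemma sv_cong: "(\<And>w. w \<in> set X \<Longrightarrow> F w = G w) \<Longrightarrow> sv F X = sv G X"
  by (induct X) simp_all

lemma zv_Cons: "zv V \<Longrightarrow> zv (\<lambda>u. V (l # u))"
  by (simp add: zv_def)
lemma zv_z: "zv V \<Longrightarrow> V ((False, False) # u) = 0"
  by (simp add: zv_def)

lemma cnta_simps[simp]: "cnta [] = 0" "cnta ((True, False) # w) = Suc (cnta w)"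
  "cnta ((False, True) # w) = cnta w" "cnta ((True, True) # w) = cnta w"
  by (simp_all add: cnta_def)

lemma length_allw: "w \<in> set (allw n) \<Longrightarrow> length w = n"
  by (induct n arbitrary: w) auto

lemma cnta_allw: "w \<in> set (allw n) \<Longrightarrow> cnta w \<le> n"
  by (induct n arbitrary: w) (auto simp: le_SucI)

lemma ow_0[simp]: "ow 0 = []" by (simp add: ow_def)
lemma ew_0[simp]: "ew 0 = [[]]" by (simp add: ew_def)
lemma ow_Suc: "ow (Suc n) = map (Cons (True, False)) (ew n) @ map (Cons (False, True)) (ow n)"
  by (simp add: ow_def ew_def filter_map o_def)
lemma ew_Suc: "ew (Suc n) = map (Cons (True, False)) (ow n) @ map (Cons (False, True)) (ew n)"
  by (simp add: ow_def ew_def filter_map o_def)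

lemma sv_filter_split: "sv F (filter P X) + sv F (filter (\<lambda>x. \<not> P x) X) = sv F X"
  by (induct X) (simp_all add: ac_simps)

lemma ow_ew: "sv F (ow n) + sv F (ew n) = sv F (allw n)"
  unfolding ow_def ew_def using sv_filter_split[of F "\<lambda>w. odd (cnta w)"] by simp

lemma wfs_hd: "w \<noteq> [] \<Longrightarrow> wfs w = tl w # tl (wfs w)"
  by (cases w rule: wfs.cases) auto

lemma dV_Dv: "w \<noteq> [] \<Longrightarrow> dV V w = V (tl w) + Dv V w"
  unfolding dV_def Dv_def by (subst wfs_hd) auto

lemma Dv_single[simp]: "Dv V [l] = V []"
  by (simp add: Dv_def)
lemma Dv_cons2: "Dv V (l # l' # w) = V (mrg l l' # w) + Dv (\<lambda>u. V (l # u)) (l' # w)"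
  by (simp add: Dv_def)

lemma Dv_cons: "u \<noteq> [] \<Longrightarrow> Dv V (l # u) = V (mrg l (hd u) # tl u) + Dv (\<lambda>w. V (l # w)) u"
  by (cases u) (simp_all add: Dv_cons2)

lemma sv_Dv_cons: "(\<And>u. u \<in> set X \<Longrightarrow> u \<noteq> []) \<Longrightarrow>
   sv (\<lambda>u. Dv V (l # u)) X = sv (\<lambda>u. V (mrg l (hd u) # tl u)) X + sv (Dv (\<lambda>w. V (l # w))) X"
  by (induct X) (simp_all add: Dv_cons ac_simps)

lemma nonempty_allw: "u \<in> set (allw (Suc n)) \<Longrightarrow> u \<noteq> []"
  using length_allw by fastforce
lemma nonempty_ow: "u \<in> set (ow (Suc n)) \<Longrightarrow> u \<noteq> []"
  unfolding ow_def using nonempty_allw by auto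
lemma nonempty_ew: "u \<in> set (ew (Suc n)) \<Longrightarrow> u \<noteq> []"
  unfolding ew_def using nonempty_allw by auto


lemma claim1:
  fixes V :: "word \<Rightarrow> 'a::ab_group_add"
  assumes c2: "\<And>x::'a. x + x = 0" and "zv V"
  shows "sv (Dv V) (ow (Suc n)) = sv V (allw n) \<and> sv (Dv V) (ew (Suc n)) = sv V (allw n)"
  using assms(2)
proof (induct n arbitrary: V)
  case 0
  then show ?case by (simp add: ow_def ew_def)
next
  case (Suc n)
  have c2b: "\<And>x y::'a. x + (x + y) = y" by (metis add.assoc add_0 c2)
  have zA: "zv (\<lambda>w. V ((True, False) # w))" "zv (\<lambda>w. V ((False, True) # w))"
    using Suc.prems zv_Cons by blast+
  note IHa = Suc.hyps[OF zA(1)] and IHb = Suc.hyps[OF zA(2)]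
  have zz: "\<And>u. V ((False, False) # u) = 0" using Suc.prems zv_z by blast
  have h1: "\<And>l. sv (\<lambda>u. V (mrg l (hd u) # tl u)) (ew (Suc n)) =
      sv (\<lambda>u. V (mrg l (True, False) # u)) (ow n) + sv (\<lambda>u. V (mrg l (False, True) # u)) (ew n)"
    by (simp add: ew_Suc)
  have h2: "\<And>l. sv (\<lambda>u. V (mrg l (hd u) # tl u)) (ow (Suc n)) =
      sv (\<lambda>u. V (mrg l (True, False) # u)) (ew n) + sv (\<lambda>u. V (mrg l (False, True) # u)) (ow n)"
    by (simp add: ow_Suc)
  have m1: "sv (\<lambda>u. Dv V ((True, False) # u)) (ew (Suc n)) =
     sv (\<lambda>u. V ((True, True) # u)) (ew n) + sv (Dv (\<lambda>w. V ((True, False) # w))) (ew (Suc n))"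
    by (subst sv_Dv_cons, erule nonempty_ew) (simp only: h1, simp add: mrg_def zz sv_zero)
  have m2: "sv (\<lambda>u. Dv V ((False, True) # u)) (ow (Suc n)) =
     sv (\<lambda>u. V ((True, True) # u)) (ew n) + sv (Dv (\<lambda>w. V ((False, True) # w))) (ow (Suc n))"
    by (subst sv_Dv_cons, erule nonempty_ow) (simp only: h2, simp add: mrg_def zz sv_zero)
  have m3: "sv (\<lambda>u. Dv V ((True, False) # u)) (ow (Suc n)) =
     sv (\<lambda>u. V ((True, True) # u)) (ow n) + sv (Dv (\<lambda>w. V ((True, False) # w))) (ow (Suc n))"
    by (subst sv_Dv_cons, erule nonempty_ow) (simp only: h2, simp add: mrg_def zz sv_zero)
  have m4: "sv (\<lambda>u. Dv V ((False, True) # u)) (ew (Suc n)) =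
     sv (\<lambda>u. V ((True, True) # u)) (ow n) + sv (Dv (\<lambda>w. V ((False, True) # w))) (ew (Suc n))"
    by (subst sv_Dv_cons, erule nonempty_ew) (simp only: h1, simp add: mrg_def zz sv_zero)
  show ?case
    apply (simp only: ow_Suc[of "Suc n"] ew_Suc[of "Suc n"])
    apply (simp only: sv_append sv_map m1 m2 m3 m4 IHa IHb allw.simps)
    by (simp add: ac_simps c2 c2b)
qed

lemma length_SS: "u \<in> set (SS n) \<Longrightarrow> length u = Suc n"
  by (induct n arbitrary: u) (auto simp: ow_def dest: length_allw)

lemma nonempty_SS: "u \<in> set (SS n) \<Longrightarrow> u \<noteq> []"
  using length_SS by fastforce

lemma sv_dV_cons: "(\<And>u. u \<in> set X \<Longrightarrow> u \<noteq> []) \<Longrightarrow>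
   sv (\<lambda>u. dV V (l # u)) X = sv V X + sv (\<lambda>u. V (mrg l (hd u) # tl u)) X + sv (Dv (\<lambda>w. V (l # w))) X"
  by (induct X) (simp_all add: dV_Dv Dv_cons ac_simps)

lemma sv_Dv_dV:
  fixes V :: "word \<Rightarrow> 'a::ab_group_add"
  assumes c2: "\<And>x::'a. x + x = 0" and ne: "\<And>u. u \<in> set X \<Longrightarrow> u \<noteq> []"
  shows "sv (Dv V) X = sv (dV V) X + sv (\<lambda>u. V (tl u)) X"
proof -
  have c2b: "\<And>x y::'a. x + (x + y) = y" by (metis add.assoc add_0 c2)
  show ?thesis using ne by (induct X) (simp_all add: dV_Dv ac_simps c2 c2b)
qed

lemma claim2:
  fixes V :: "word \<Rightarrow> 'a::ab_group_add"
  assumes c2: "\<And>x::'a. x + x = 0" and "zv V"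
  shows "sv (dV V) (SS n) = V (replicate n (True, True)) + sv V (allw n)"
  using assms(2)
proof (induct n arbitrary: V)
  case 0
  then show ?case by (simp add: c2)
next
  case (Suc n)
  have c2b: "\<And>x y::'a. x + (x + y) = y" by (metis add.assoc add_0 c2)
  have zz: "\<And>u. V ((False, False) # u) = 0" using Suc.prems zv_z by blast
  have zc: "zv (\<lambda>w. V ((True, True) # w))" "zv (\<lambda>w. V ((False, True) # w))"
    using Suc.prems zv_Cons by blast+
  have IH: "sv (dV (\<lambda>w. V ((True, True) # w))) (SS n) =
      V ((True, True) # replicate n (True, True)) + sv (\<lambda>w. V ((True, True) # w)) (allw n)"
    using Suc.hyps[OF zc(1)] by simp
  have X: "sv V (SS n) + sv (\<lambda>u. V (mrg (True, True) (hd u) # tl u)) (SS n)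
           + sv (\<lambda>u. V ((True, True) # tl u)) (SS n) =
       sv (\<lambda>u. V ((False, True) # u)) (ow n) + sv (\<lambda>u. V ((True, False) # u)) (ow n)
       + sv (\<lambda>u. V ((True, True) # u)) (ow n)"
  proof (cases n)
    case 0
    then show ?thesis by simp
  next
    case (Suc k)
    show ?thesis unfolding Suc SS.simps
      by (simp add: mrg_def zz sv_zero ac_simps c2 c2b)
  qed
  have cpart: "sv (\<lambda>u. dV V ((True, True) # u)) (SS n) =
       sv (\<lambda>u. V ((False, True) # u)) (ow n) + sv (\<lambda>u. V ((True, False) # u)) (ow n)
       + sv (\<lambda>u. V ((True, True) # u)) (ow n)
       + (V ((True, True) # replicate n (True, True)) + sv (\<lambda>w. V ((True, True) # w)) (allw n))"
    apply (subst sv_dV_cons, erule nonempty_SS)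
    apply (subst sv_Dv_dV[OF c2], erule nonempty_SS)
    apply (simp only: IH X[symmetric])
    by (simp add: ac_simps)
  have h2: "sv (\<lambda>u. V (mrg (False, True) (hd u) # tl u)) (ow (Suc n)) =
      sv (\<lambda>u. V ((True, True) # u)) (ew n)"
    by (simp add: ow_Suc mrg_def zz sv_zero)
  have bpart: "sv (\<lambda>u. dV V ((False, True) # u)) (ow (Suc n)) =
      sv (\<lambda>u. V ((True, False) # u)) (ew n) + sv (\<lambda>u. V ((False, True) # u)) (ow n)
      + sv (\<lambda>u. V ((True, True) # u)) (ew n) + sv (\<lambda>w. V ((False, True) # w)) (allw n)"
    apply (subst sv_dV_cons, erule nonempty_ow)
    apply (simp only: h2 claim1[OF c2 zc(2), THEN conjunct1])
    by (simp add: ow_Suc)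
  have oe1: "sv (\<lambda>u. V ((True, False) # u)) (ow n) + sv (\<lambda>u. V ((True, False) # u)) (ew n)
     = sv (\<lambda>u. V ((True, False) # u)) (allw n)" by (rule ow_ew)
  have oe2: "sv (\<lambda>u. V ((True, True) # u)) (ow n) + sv (\<lambda>u. V ((True, True) # u)) (ew n)
     = sv (\<lambda>u. V ((True, True) # u)) (allw n)" by (rule ow_ew)
  show ?case
    apply (simp only: SS.simps sv_append sv_map cpart bpart allw.simps replicate_Suc)
    apply (simp only: oe1[symmetric] oe2[symmetric])
    by (simp add: ac_simps c2 c2b)
qed

definition bperm :: "bool \<Rightarrow> perm" where
  "bperm b = (if b then [1, 0] else [0, 1])"

definition gel :: "letter \<Rightarrow> perm" where
  "gel g = (if fst g then [1, 0] else [0, 1]) @ (if snd g then [3, 2] else [2, 3])"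

fun gsimp :: "letter \<Rightarrow> word \<Rightarrow> simp" where
  "gsimp g [] = [gel g]"
| "gsimp g (l # w) = gel g # gsimp (mrg g l) w"

fun bsteps :: "'x list \<Rightarrow> bool list" where
  "bsteps (x # y # r) = (x \<noteq> y) # bsteps (y # r)"
| "bsteps _ = []"

lemma bool_eq_eq[simp]: "(x = (x = (y::bool))) = y"
  by auto

lemma mrg_assoc: "mrg g (mrg h l) = mrg (mrg g h) l"
  by (auto simp: mrg_def)
lemma mrg_cancel: "mrg g (mrg g h) = h"
  by (cases g; cases h) (auto simp: mrg_def)

lemma pcomp_gel: "pcomp (gel g) (gel h) = gel (mrg g h)"
  by (cases g; cases h) (auto simp: pcomp_def gel_def mrg_def)

lemma lmul_gsimp: "lmul (gel g) (gsimp h w) = gsimp (mrg g h) w"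
  by (induct w arbitrary: h) (simp_all add: lmul_def pcomp_gel mrg_assoc)

lemma gsimp_lmul: "gsimp g w = lmul (gel g) (gsimp (False, False) w)"
  by (simp add: lmul_gsimp mrg_def)

lemma is_perm_gel: "is_perm 4 (gel g)"
  by (cases g) (auto simp: is_perm_def gel_def)

lemma set_gsimp: "p \<in> set (gsimp g w) \<Longrightarrow> \<exists>h. p = gel h"
  by (induct w arbitrary: g) fastforce+

lemma is_simp_gsimp: "is_simp 4 (gsimp g w)"
  unfolding is_simp_def
  by (cases w) (auto dest!: set_gsimp simp: is_perm_gel)

lemma degenerate_Cons: "degenerate s \<Longrightarrow> degenerate (x # s)"
  unfolding degenerate_def by (metis Suc_less_eq length_Cons nth_Cons_Suc)

lemma degenerate_gsimp: "(False, False) \<in> set w \<Longrightarrow> degenerate (gsimp g w)"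
proof (induct w arbitrary: g)
  case Nil then show ?case by simp
next
  case (Cons l w)
  show ?case
  proof (cases "l = (False, False)")
    case True
    then show ?thesis unfolding degenerate_def
      by (cases w) (auto intro!: exI[of _ 0] simp: mrg_def)
  next
    case False
    then have "(False, False) \<in> set w" using Cons.prems by simp
    then show ?thesis using Cons.hyps by (simp add: degenerate_Cons)
  qed
qed

lemma bd_Cons: "2 \<le> length s \<Longrightarrow> bd (x # s) = s # map (Cons x) (bd s)"
proof -
  assume a: "2 \<le> length s"
  then have "s \<noteq> []" by auto
  with a show ?thesis
    unfolding bd_def face_def
    by (simp add: upt_conv_Cons map_Suc_upt[symmetric] del: upt_Suc)
qed

lemma length_gsimp[simp]: "length (gsimp g w) = Suc (length w)"
  by (induct w arbitrary: g) auto

lemma bd_gsimp: "w \<noteq> [] \<Longrightarrow> bd (gsimp g w) = gsimp (mrg g (hd w)) (tl w) # map (gsimp g) (tl (wfs w))"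
proof (induct w arbitrary: g)
  case Nil then show ?case by simp
next
  case (Cons l w)
  show ?case
  proof (cases w)
    case Nil
    then show ?thesis by (simp add: bd_def face_def)
  next
    case (Cons l' w')
    have IH: "bd (gsimp (mrg g l) w) = gsimp (mrg (mrg g l) l') w' # map (gsimp (mrg g l)) (tl (wfs w))"
      using Cons.hyps[of "mrg g l"] Cons by simp
    have e: "\<And>u. gel g # gsimp (mrg g l) u = gsimp g (l # u)" by simp
    have L: "2 \<le> length (gsimp (mrg g l) w)" using Cons by simp
    have "bd (gsimp g (l # w)) = bd (gel g # gsimp (mrg g l) w)" by simp
    also have "\<dots> = gsimp (mrg g l) w # map (Cons (gel g)) (bd (gsimp (mrg g l) w))"
      by (rule bd_Cons[OF L])
    also have "\<dots> = gsimp (mrg g l) w # map (Cons (gel g)) (gsimp (mrg (mrg g l) l') w' # map (gsimp (mrg g l)) (tl (wfs w)))"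
      by (simp only: IH)
    finally show ?thesis using Cons by (simp add: mrg_assoc o_def)
  qed
qed

lemma map_gel_zip: "length U = length W \<Longrightarrow> U \<noteq> [] \<Longrightarrow>
   map gel (zip U W) = gsimp (hd U, hd W) (zip (bsteps U) (bsteps W))"
proof (induct U arbitrary: W)
  case Nil then show ?case by simp
next
  case (Cons x U)
  then obtain y W' where W: "W = y # W'" by (cases W) auto
  show ?case
  proof (cases U)
    case Nil then show ?thesis using Cons W by simp
  next
    case (Cons x' U')
    then obtain y' W'' where "W' = y' # W''" using Cons.prems W by (cases W') auto
    then show ?thesis using Cons Cons.prems Cons.hyps[of W'] W by (auto simp: mrg_def)
  qed
qed

locale ealg =
  fixes d :: "'a::ab_group_add \<Rightarrow> 'a" and act :: "simp \<Rightarrow> 'a list \<Rightarrow> 'a" and \<alpha> \<beta> :: 'a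
  assumes EA: "E_algebra d act"
begin

lemma c2: "(x::'a) + x = 0"
  using EA[unfolded E_algebra_def, THEN conjunct1] by blast
lemma c2b: "(x::'a) + (x + y) = y"
  by (metis add.assoc add_0 c2)
lemma d_add: "d (x + y) = d x + d y"
  using EA[unfolded E_algebra_def, THEN conjunct2, THEN conjunct1] by blast
lemma d0: "d 0 = 0"
  using d_add[of 0 0] by simp
lemma act_deg: "is_simp r s \<Longrightarrow> degenerate s \<Longrightarrow> length xs = r \<Longrightarrow> act s xs = 0"
  using EA[unfolded E_algebra_def, THEN conjunct2, THEN conjunct2, THEN conjunct2, THEN conjunct2, THEN conjunct1] by blast
lemma act_bd: "is_simp r s \<Longrightarrow> length xs = r \<Longrightarrow> homd d (act s) xs = actC act (bd s) xs"
  using EA[unfolded E_algebra_def, THEN conjunct2, THEN conjunct2, THEN conjunct2, THEN conjunct2, THEN conjunct2, THEN conjunct1] by blast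
lemma act_lmul: "is_perm r g \<Longrightarrow> is_simp r s \<Longrightarrow> length xs = r \<Longrightarrow>
    act (lmul g s) xs = act s (map (\<lambda>k. xs ! (g ! k)) [0..<r])"
  using EA[unfolded E_algebra_def, THEN conjunct2, THEN conjunct2, THEN conjunct2, THEN conjunct2, THEN conjunct2, THEN conjunct2, THEN conjunct1] by blast
lemma act_comp: "ys \<noteq> [] \<Longrightarrow> is_simp (length ys) x \<Longrightarrow>
        (\<forall>y\<in>set ys. 1 \<le> arity y \<and> is_simp (arity y) y) \<Longrightarrow>
        length xs = sum_list (map arity ys) \<Longrightarrow>
        actC act (compE x ys) xs =
          act x (map (\<lambda>k. act (ys ! k)
                    (take (arity (ys ! k)) (drop (sum_list (map arity (take k ys))) xs)))
                 [0..<length ys])"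
  using EA[unfolded E_algebra_def, THEN conjunct2, THEN conjunct2, THEN conjunct2, THEN conjunct2, THEN conjunct2, THEN conjunct2, THEN conjunct2, THEN conjunct1] by blast

definition val :: "simp \<Rightarrow> 'a" where
  "val s = act s [\<alpha>, \<alpha>, \<beta>, \<beta>]"
definition bdval :: "simp \<Rightarrow> 'a" where
  "bdval s = sum_list (map val (bd s))"
definition V :: "word \<Rightarrow> 'a" where
  "V w = val (gsimp (False, False) w)"

lemma val_deg: "is_simp 4 s \<Longrightarrow> degenerate s \<Longrightarrow> val s = 0"
  unfolding val_def using act_deg[of 4 s "[\<alpha>, \<alpha>, \<beta>, \<beta>]"] by simp

lemma bdval_deg: "is_simp 4 s \<Longrightarrow> degenerate s \<Longrightarrow> bdval s = 0"
proof -
  assume s: "is_simp 4 s" "degenerate s"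
  have "bdval s = actC act (bd s) [\<alpha>, \<alpha>, \<beta>, \<beta>]"
    by (simp add: bdval_def actC_def val_def[abs_def])
  also have "\<dots> = homd d (act s) [\<alpha>, \<alpha>, \<beta>, \<beta>]"
    by (rule act_bd[symmetric, OF s(1)]) simp
  also have "\<dots> = 0"
    unfolding homd_def using s by (simp add: act_deg[OF s] d0)
  finally show ?thesis .
qed

lemma val_lmul_gel: "is_simp 4 s \<Longrightarrow> val (lmul (gel g) s) = val s"
proof -
  assume s: "is_simp 4 s"
  have e: "map (\<lambda>k. [\<alpha>, \<alpha>, \<beta>, \<beta>] ! (gel g ! k)) [0..<4] = [\<alpha>, \<alpha>, \<beta>, \<beta>]"
    by (cases g) (simp add: gel_def upt_rec)
  show ?thesis unfolding val_def by (subst act_lmul[OF is_perm_gel s]) (simp_all add: e)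
qed

lemma val_gsimp: "val (gsimp g w) = V w"
  unfolding V_def
  by (subst gsimp_lmul, rule val_lmul_gel, rule is_simp_gsimp)

lemma zvV: "zv V"
  unfolding zv_def V_def
  by (auto intro!: val_deg is_simp_gsimp degenerate_gsimp)

lemma bdval_gsimp: "bdval (gsimp g w) = dV V w"
proof (cases "w = []")
  case True
  then show ?thesis by (simp add: bdval_def dV_def bd_def)
next
  case False
  then show ?thesis
    unfolding bdval_def dV_def
    by (subst wfs_hd[OF False]) (simp add: bd_gsimp sv_def val_gsimp o_def)
qed

lemma homd_add: "homd d (\<lambda>xs. F xs + G xs) xs = homd d F xs + homd d G xs"
  unfolding homd_def by (simp add: d_add sum.distrib ac_simps)

lemma homd_actC: "(\<And>s. s \<in> set C \<Longrightarrow> is_simp 4 s) \<Longrightarrow>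
   homd d (actC act C) [\<alpha>, \<alpha>, \<beta>, \<beta>] = sum_list (map bdval C)"
proof (induct C)
  case Nil
  then show ?case by (simp add: homd_def actC_def d0)
next
  case (Cons s C)
  have e: "actC act (s # C) = (\<lambda>xs. act s xs + actC act C xs)"
    by (simp add: actC_def fun_eq_iff)
  have h1: "homd d (act s) [\<alpha>, \<alpha>, \<beta>, \<beta>] = bdval s"
    by (subst act_bd[OF Cons.prems[of s]]) (simp_all add: bdval_def actC_def val_def[abs_def])
  have h2: "homd d (actC act C) [\<alpha>, \<alpha>, \<beta>, \<beta>] = sum_list (map bdval C)"
    by (rule Cons.hyps) (rule Cons.prems, simp)
  show ?case unfolding e homd_add h1 h2 by simp
qed

end

lemma ez2_single_r: "xs \<noteq> [] \<Longrightarrow> ez2 xs [y] = [map (\<lambda>x. (x, y)) xs]"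
  by (cases xs rule: remdups_adj.cases) auto

lemma ez2_single_l: "ys \<noteq> [] \<Longrightarrow> ez2 [x] ys = [map (Pair x) ys]"
  by (cases ys) auto

lemma ez2_map: "ez2 (map f xs) (map g ys) = map (map (map_prod f g)) (ez2 xs ys)"
  by (induct xs ys rule: ez2.induct) (auto simp: o_def)

lemma ez2_hd: "\<pi> \<in> set (ez2 P Q) \<Longrightarrow> \<pi> \<noteq> [] \<and> hd \<pi> = (hd P, hd Q)"
  by (induct P Q arbitrary: \<pi> rule: ez2.induct) auto

lemma ezm_single: "y \<noteq> [] \<Longrightarrow> ezm [y] = [map (\<lambda>x. [x]) y]"
  by (simp add: ez2_single_r o_def)

definition PP :: "nat \<Rightarrow> bool list" where
  "PP n = map odd [0..<Suc n]"

lemma xt_PP: "xt i = map bperm (PP i)"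
  by (simp add: xt_def PP_def bperm_def)

lemma PP_ne[simp]: "PP n \<noteq> []" and length_PP[simp]: "length (PP n) = Suc n"
  by (simp_all add: PP_def)

lemma compE_P4: "compE (xt i) [xt 0, xt 0] = [map (\<lambda>p. perm_gamma p [[0, 1], [0, 1]]) (xt i)]"
proof -
  have "ezm [xt 0, xt 0] = [[[[0,1],[0,1]]]]" by (simp add: xt_def)
  moreover have "xt i \<noteq> []" by (simp add: xt_def)
  ultimately show ?thesis
    by (simp add: compE_def ez2_single_r o_def)
qed

lemma compE_P5: "compE (xt 0) [xt j, xt k] = map (map gel) (ez2 (PP j) (PP k))"
proof -
  have e1: "ezm [xt k] = [map (\<lambda>x. [x]) (xt k)]"
    by (rule ezm_single) (simp add: xt_def)
  have e2: "ezm [xt j, xt k] = map (map (\<lambda>(u, v). [u, v])) (ez2 (xt j) (xt k))"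
  proof -
    have "ez2 (xt j) (map (\<lambda>x. [x]) (xt k)) = map (map (map_prod id (\<lambda>x. [x]))) (ez2 (xt j) (xt k))"
      using ez2_map[of id "xt j" "\<lambda>x. [x]" "xt k"] by simp
    then show ?thesis using e1 by (simp add: o_def map_prod_def split_def)
  qed
  have ne: "\<And>z. z \<in> set (ezm [xt j, xt k]) \<Longrightarrow> z \<noteq> []"
    unfolding e2 using ez2_hd by fastforce
  have e3: "ezm [xt 0, xt j, xt k] = map (map (\<lambda>t. [0, 1] # t)) (ezm [xt j, xt k])"
  proof -
    have "ezm [xt 0, xt j, xt k] = concat (map (\<lambda>z. map (map (\<lambda>(a, t). a # t)) (ez2 [[0, 1]] z)) (ezm [xt j, xt k]))"
      by (simp add: xt_def)
    also have "\<dots> = concat (map (\<lambda>z. [map (\<lambda>t. [0, 1] # t) z]) (ezm [xt j, xt k]))"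
      by (rule arg_cong[where f = concat], rule map_cong[OF refl]) (simp add: ez2_single_l ne o_def)
    finally show ?thesis by (induct "ezm [xt j, xt k]") auto
  qed
  have pg: "\<And>s t. perm_gamma [0, 1] [bperm s, bperm t] = gel (s, t)"
    by (simp add: perm_gamma_def bperm_def gel_def)
  have pg': "\<And>x. perm_gamma [0, Suc 0] [bperm (fst x), bperm (snd x)] = gel x"
    by (case_tac x) (simp add: perm_gamma_def bperm_def gel_def)
  show ?thesis
    unfolding compE_def
    unfolding e3
    unfolding e2
    unfolding xt_PP ez2_map
    by (simp add: o_def split_def pg')
qed


definition pw :: "(bool \<times> bool) list \<Rightarrow> word" where
  "pw \<pi> = zip (bsteps (map fst \<pi>)) (bsteps (map snd \<pi>))"
definition alt :: "bool list \<Rightarrow> bool" where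
  "alt P \<longleftrightarrow> (\<forall>s\<in>set (bsteps P). s)"

lemma length_bsteps[simp]: "length (bsteps L) = length L - 1"
  by (induct L rule: bsteps.induct) auto

lemma bsteps_rep: "bsteps (replicate n x) = replicate (n - 1) False"
proof (induct n)
  case 0 then show ?case by simp
next
  case (Suc n) then show ?case by (cases n) auto
qed

lemma alt_bsteps: "alt P \<Longrightarrow> bsteps P = replicate (length P - 1) True"
  unfolding alt_def by (metis length_bsteps replicate_length_same)

lemma alt_Cons2: "alt (x # x' # r) \<Longrightarrow> alt (x' # r) \<and> x \<noteq> x'"
  by (auto simp: alt_def)

lemma bsteps_Cons: "L \<noteq> [] \<Longrightarrow> bsteps (x # L) = (x \<noteq> hd L) # bsteps L"
  by (cases L) auto

lemma pw_Cons: "\<pi> \<noteq> [] \<Longrightarrow> pw (p # \<pi>) = (fst p \<noteq> fst (hd \<pi>), snd p \<noteq> snd (hd \<pi>)) # pw \<pi>"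
  by (cases \<pi>) (auto simp: pw_def)

lemma kw_0: "kw 0 n = [replicate n (False, True)]"
  by (induct n) (auto simp: kw_def filter_map o_def)

lemma kw_nn: "kw n n = [replicate n (True, False)]"
proof (induct n)
  case 0 then show ?case by (simp add: kw_def)
next
  case (Suc n)
  have "filter (\<lambda>w. cnta w = Suc n) (allw n) = []"
    using cnta_allw by (auto simp: filter_empty_conv) (metis Suc_n_not_le_n)
  then show ?case using Suc by (simp add: kw_def filter_map o_def)
qed

lemma kw_Suc: "kw (Suc j) (Suc n) = map (Cons (True, False)) (kw j n) @ map (Cons (False, True)) (kw (Suc j) n)"
  by (simp add: kw_def filter_map o_def)

lemma PP_alt: "alt (PP n)"
proof -
  have "\<And>k. bsteps (map odd [k..<k + Suc n]) = replicate n True"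
  proof (induct n)
    case 0 then show ?case by simp
  next
    case (Suc n)
    have e: "[k..<k + Suc (Suc n)] = k # [Suc k..<Suc k + Suc n]"
      by (simp add: upt_conv_Cons del: upt_Suc)
    show ?case unfolding e using Suc[of "Suc k"]
      by (simp add: bsteps_Cons upt_conv_Cons del: upt_Suc)
  qed
  from this[of 0] show ?thesis by (simp add: alt_def PP_def del: upt_Suc)
qed

lemma bsteps_const: "(\<forall>y\<in>set L. y = x) \<Longrightarrow> bsteps L = replicate (length L - 1) False"
  by (induct L rule: bsteps.induct) auto

lemma ez2_words: "alt P \<Longrightarrow> alt Q \<Longrightarrow> P \<noteq> [] \<Longrightarrow> Q \<noteq> [] \<Longrightarrow>
   map pw (ez2 P Q) = kw (length P - 1) (length P + length Q - 2)"
proof (induct P Q rule: ez2.induct)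
  case (3 x v va)
  have e1: "bsteps (map fst (map (Pair x) (v # va))) = replicate (length va) False"
    by (subst bsteps_const[of _ x]) auto
  have e2: "bsteps (map snd (map (Pair x) (v # va))) = replicate (length va) True"
    using alt_bsteps[OF 3(2)] by (simp add: o_def)
  have "map pw (ez2 [x] (v # va)) = [pw (map (Pair x) (v # va))]" by simp
  also have "pw (map (Pair x) (v # va)) = replicate (length va) (False, True)"
    unfolding pw_def e1 e2 zip_replicate by simp
  finally show ?case by (simp add: kw_0)
next
  case (4 v vb vc y)
  have e1: "bsteps (map snd (map (\<lambda>x. (x, y)) (v # vb # vc))) = replicate (Suc (length vc)) False"
    by (subst bsteps_const[of _ y]) auto
  have e2: "bsteps (map fst (map (\<lambda>x. (x, y)) (v # vb # vc))) = replicate (Suc (length vc)) True"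
    using alt_bsteps[OF 4(1)] by (simp add: o_def)
  have "map pw (ez2 (v # vb # vc) [y]) = [pw (map (\<lambda>x. (x, y)) (v # vb # vc))]" by simp
  also have "pw (map (\<lambda>x. (x, y)) (v # vb # vc)) = replicate (Suc (length vc)) (True, False)"
    unfolding pw_def e1 e2 zip_replicate by simp
  finally show ?case by (simp add: kw_nn)
next
  case (5 x x' xs y y' ys)
  have a1: "alt (x' # xs)" "x \<noteq> x'" using alt_Cons2[OF 5(3)] by auto
  have a2: "alt (y' # ys)" "y \<noteq> y'" using alt_Cons2[OF 5(4)] by auto
  have A: "map pw (map (Cons (x, y)) (ez2 (x' # xs) (y # y' # ys))) =
     map (Cons (True, False)) (map pw (ez2 (x' # xs) (y # y' # ys)))"
    using a1 by (auto simp: pw_Cons dest: ez2_hd)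
  have B: "map pw (map (Cons (x, y)) (ez2 (x # x' # xs) (y' # ys))) =
     map (Cons (False, True)) (map pw (ez2 (x # x' # xs) (y' # ys)))"
    using a2 by (auto simp: pw_Cons dest: ez2_hd)
  show ?case
    apply (simp only: ez2.simps map_append A B)
    apply (subst 5(1)[OF a1(1) 5(4)], simp, simp)
    apply (subst 5(2)[OF 5(3) a2(1)], simp, simp)
    using kw_Suc[of "length xs" "Suc (length xs + length ys)"] by simp
qed auto

lemma xt_set: "p \<in> set (xt i) \<Longrightarrow> p = [0, 1] \<or> p = [1, 0]"
  unfolding xt_PP bperm_def by (auto split: if_splits)

lemma is_simp_xt: "is_simp 2 (xt i)"
  unfolding is_simp_def by (auto simp: xt_def is_perm_def)

lemma arity_xt[simp]: "arity (xt i) = 2"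
  by (simp add: arity_def xt_def upt_conv_Cons del: upt_Suc)

lemma is_simp_xt': "is_simp (Suc (Suc 0)) (xt i)"
  using is_simp_xt by (simp add: numeral_2_eq_2)

lemma sum_filter_cnt:
  fixes F :: "word \<Rightarrow> 'a::ab_group_add" and f :: "word \<Rightarrow> nat"
  shows "(\<forall>w\<in>set X. f w \<le> N) \<Longrightarrow> (\<Sum>j\<le>N. sv F (filter (\<lambda>w. f w = j) X)) = sv F X"
proof (induct X)
  case Nil then show ?case by simp
next
  case (Cons w X)
  have "(\<Sum>j\<le>N. sv F (filter (\<lambda>u. f u = j) (w # X))) =
        (\<Sum>j\<le>N. (if f w = j then F w else 0) + sv F (filter (\<lambda>u. f u = j) X))"
    by (rule sum.cong) auto
  also have "\<dots> = (\<Sum>j\<le>N. (if f w = j then F w else 0)) + (\<Sum>j\<le>N. sv F (filter (\<lambda>u. f u = j) X))"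
    by (rule sum.distrib)
  also have "(\<Sum>j\<le>N. (if f w = j then F w else 0)) = F w"
    using Cons.prems by (subst sum.delta'[where b = "\<lambda>_. F w"]) auto
  finally show ?case using Cons by simp
qed

lemma sum_kw: "(\<Sum>j\<le>i. sv F (kw j i)) = sv F (allw i)"
  unfolding kw_def by (rule sum_filter_cnt) (simp add: cnta_allw)

context ealg
begin

lemma P4: "cup act i (cup act 0 \<alpha> \<beta>) (cup act 0 \<alpha> \<beta>) = val (map (\<lambda>p. pcomp t23 (fS p)) (xt i))"
proof -
  let ?s = "map (\<lambda>p. perm_gamma p [[0, 1], [0, 1]]) (xt i)"
  have "actC act (compE (xt i) [xt 0, xt 0]) [\<alpha>, \<beta>, \<alpha>, \<beta>] =
        act (xt i) [act (xt 0) [\<alpha>, \<beta>], act (xt 0) [\<alpha>, \<beta>]]"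
    by (subst act_comp) (simp_all add: is_simp_xt is_simp_xt' upt_rec)
  then have 1: "cup act i (cup act 0 \<alpha> \<beta>) (cup act 0 \<alpha> \<beta>) = act ?s [\<alpha>, \<beta>, \<alpha>, \<beta>]"
    by (simp add: cup_def compE_P4 actC_def)
  have sp: "is_simp 4 ?s"
    unfolding is_simp_def
    by (auto simp: xt_def perm_gamma_def is_perm_def)
  have pt: "is_perm 4 t23" unfolding t23_def is_perm_def by (auto simp: numeral_eq_Suc lessThan_Suc)
  have e: "map (\<lambda>p. pcomp t23 (fS p)) (xt i) = lmul t23 ?s"
    unfolding lmul_def
    by (auto dest!: xt_set simp: fS_def perm_gamma_def pcomp_def t23_def)
  have "val (lmul t23 ?s) = act ?s [\<alpha>, \<beta>, \<alpha>, \<beta>]"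
    unfolding val_def by (subst act_lmul[OF pt sp]) (simp_all add: t23_def upt_rec)
  then show ?thesis using 1 e by simp
qed

lemma val_map_gel: "\<pi> \<noteq> [] \<Longrightarrow> val (map gel \<pi>) = V (pw \<pi>)"
proof -
  assume ne: "\<pi> \<noteq> []"
  have "map gel \<pi> = map gel (zip (map fst \<pi>) (map snd \<pi>))" by (simp add: zip_map_fst_snd)
  also have "\<dots> = gsimp (hd (map fst \<pi>), hd (map snd \<pi>)) (pw \<pi>)"
    unfolding pw_def by (rule map_gel_zip) (simp_all add: ne)
  finally show ?thesis by (simp add: val_gsimp)
qed

lemma P5: "cup act 0 (cup act j \<alpha> \<alpha>) (cup act k \<beta> \<beta>) = sv V (kw j (j + k))"
proof -
  have "actC act (compE (xt 0) [xt j, xt k]) [\<alpha>, \<alpha>, \<beta>, \<beta>] =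
        act (xt 0) [act (xt j) [\<alpha>, \<alpha>], act (xt k) [\<beta>, \<beta>]]"
    by (subst act_comp) (simp_all add: is_simp_xt is_simp_xt' upt_rec)
  then have "cup act 0 (cup act j \<alpha> \<alpha>) (cup act k \<beta> \<beta>) =
        sum_list (map val (map (map gel) (ez2 (PP j) (PP k))))"
    by (simp add: cup_def compE_P5 actC_def val_def[abs_def])
  also have "\<dots> = sv V (map pw (ez2 (PP j) (PP k)))"
    unfolding sv_def
    apply (simp only: map_map o_def)
    apply (rule arg_cong[where f = sum_list], rule map_cong[OF refl], rule val_map_gel)
    apply (blast dest: ez2_hd)
    done
  also have "\<dots> = sv V (kw j (j + k))"
    by (subst ez2_words) (simp_all add: PP_alt)
  finally show ?thesis .
qed

lemma P5sum: "(\<Sum>j\<le>i. cup act 0 (cup act j \<alpha> \<alpha>) (cup act (i - j) \<beta> \<beta>)) = sv V (allw i)"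
proof -
  have "(\<Sum>j\<le>i. cup act 0 (cup act j \<alpha> \<alpha>) (cup act (i - j) \<beta> \<beta>)) = (\<Sum>j\<le>i. sv V (kw j i))"
    by (rule sum.cong) (simp_all add: P5)
  then show ?thesis by (simp add: sum_kw)
qed

end

definition tf :: "bool \<Rightarrow> perm" where "tf b = pcomp t23 (fS (bperm b))"
definition gf :: "bool \<Rightarrow> perm" where "gf b = gS (bperm b)"

lemma gf_gel: "gf b = gel (b, b)"
  by (simp add: gf_def gS_def bperm_def gel_def)
lemma tf_not: "tf (\<not> b) = pcomp (gel (True, True)) (tf b)"
  by (cases b) (simp_all add: tf_def bperm_def fS_def pcomp_def t23_def gel_def)
lemma gf_not: "gf (\<not> b) = pcomp (gel (True, True)) (gf b)"
  by (cases b) (simp_all add: gf_def bperm_def gS_def pcomp_def gel_def)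
lemma perm_tf: "is_perm 4 (tf b)"
  by (cases b) (auto simp: tf_def bperm_def fS_def pcomp_def t23_def is_perm_def numeral_eq_Suc lessThan_Suc)
lemma perm_gf: "is_perm 4 (gf b)"
  unfolding gf_gel by (rule is_perm_gel)

definition HH :: "nat \<Rightarrow> nat \<Rightarrow> perm" where
  "HH j r = (if r \<le> j then tf (odd r) else gf (odd (r - 1)))"

lemma perm_HH: "is_perm 4 (HH j r)"
  by (simp add: HH_def perm_tf perm_gf)

lemma length_xt[simp]: "length (xt n) = Suc n"
  by (simp add: xt_def)

lemma H1_xt: "H1 (xt n) = map (\<lambda>j. map (HH j) [0..<Suc (Suc n)]) [0..<Suc n]"
proof -
  have hj: "\<And>j. j < Suc n \<Longrightarrow>
     map (\<lambda>p. pcomp t23 (fS p)) (take (Suc j) (xt n)) @ map gS (drop j (xt n)) = map (HH j) [0..<Suc (Suc n)]"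
  proof -
    fix j assume j: "j < Suc n"
    show "map (\<lambda>p. pcomp t23 (fS p)) (take (Suc j) (xt n)) @ map gS (drop j (xt n)) = map (HH j) [0..<Suc (Suc n)]"
    proof (rule nth_equalityI)
      show "length (map (\<lambda>p. pcomp t23 (fS p)) (take (Suc j) (xt n)) @ map gS (drop j (xt n))) =
            length (map (HH j) [0..<Suc (Suc n)])"
        using j by (simp add: xt_PP)
      fix r assume r: "r < length (map (\<lambda>p. pcomp t23 (fS p)) (take (Suc j) (xt n)) @ map gS (drop j (xt n)))"
      then have r': "r < Suc (Suc n)" using j by (simp add: xt_PP)
      have xn: "\<And>m. m < Suc n \<Longrightarrow> xt n ! m = bperm (odd m)"
        by (simp add: xt_PP PP_def del: upt_Suc)
      show "(map (\<lambda>p. pcomp t23 (fS p)) (take (Suc j) (xt n)) @ map gS (drop j (xt n))) ! r = map (HH j) [0..<Suc (Suc n)] ! r"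
      proof (cases "r < Suc j")
        case True
        then show ?thesis using j r' by (simp add: nth_append xt_PP HH_def tf_def min_def del: upt_Suc) (simp add: PP_def del: upt_Suc)
      next
        case False
        then have "(map (\<lambda>p. pcomp t23 (fS p)) (take (Suc j) (xt n)) @ map gS (drop j (xt n))) ! r
            = gS (xt n ! (j + (r - Suc j)))"
        proof -
          have lA: "length (map (\<lambda>p. pcomp t23 (fS p)) (take (Suc j) (xt n))) = Suc j"
            using j by simp
          show ?thesis using False j r'
            by (simp only: nth_append lA if_False, simp add: nth_drop)
        qed
        also have "j + (r - Suc j) = r - 1" using False by simp
        also have "gS (xt n ! (r - 1)) = gf (odd (r - 1))"
          using r' False by (simp add: xn gf_def)
        finally show ?thesis using False r' by (simp add: HH_def del: upt_Suc)
      qed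
    qed
  qed
  show ?thesis
    unfolding H1_def length_xt by (rule map_cong[OF refl], rule hj, auto)
qed

lemma face_nth: "k < length s \<Longrightarrow> i < length s - 1 \<Longrightarrow>
   face k s ! i = (if i < k then s ! i else s ! Suc i)"
  by (auto simp: face_def nth_append min_def)

lemma length_face: "k < length s \<Longrightarrow> length (face k s) = length s - 1"
  by (simp add: face_def)

lemma face_map_upt: "k \<le> L \<Longrightarrow>
   face k (map F [0..<Suc L]) = map (\<lambda>r. F (if r < k then r else Suc r)) [0..<L]"
  by (rule nth_equalityI) (simp_all add: length_face face_nth del: upt_Suc)

lemma degenerate_map_upt: "Suc r < L \<Longrightarrow> F r = F (Suc r) \<Longrightarrow> degenerate (map F [0..<L])"
  unfolding degenerate_def by (rule exI[of _ r]) simp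

lemma is_simp_map_upt: "(\<And>r. is_perm 4 (F r)) \<Longrightarrow> is_simp 4 (map F [0..<Suc L])"
  unfolding is_simp_def by auto

lemma telescope:
  fixes f :: "nat \<Rightarrow> 'a::ab_group_add"
  assumes c2: "\<And>x::'a. x + x = 0"
  shows "(\<Sum>j<N. f j + f (Suc j)) = f 0 + f N"
proof (induct N)
  case 0 then show ?case using c2 by simp
next
  case (Suc N)
  have c2b: "\<And>x y::'a. x + (x + y) = y" by (metis add.assoc add_0 c2)
  show ?case using Suc by (simp add: ac_simps c2b)
qed

declare upt_Suc[simp del]

context ealg
begin

definition MM :: "nat \<Rightarrow> nat \<Rightarrow> perm" where
  "MM m r = (if r < m then tf (odd r) else gf (odd r))"

lemma P2:
  "sum_list (map bdval (H1 (xt n))) = val (map (\<lambda>p. pcomp t23 (fS p)) (xt n)) + V (replicate n (True, True))"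
proof -
  define T where "T j k = val (face k (map (HH j) [0..<Suc (Suc n)]))" for j k
  define vM where "vM m = val (map (MM m) [0..<Suc n])" for m
  have faceT: "\<And>j k. k \<le> Suc n \<Longrightarrow> face k (map (HH j) [0..<Suc (Suc n)]) =
        map (\<lambda>r. HH j (if r < k then r else Suc r)) [0..<Suc n]"
    by (rule face_map_upt)
  have simpT: "\<And>j k. k \<le> Suc n \<Longrightarrow> is_simp 4 (face k (map (HH j) [0..<Suc (Suc n)]))"
    by (simp add: faceT is_simp_map_upt perm_HH)
  have bdv: "\<And>j. bdval (map (HH j) [0..<Suc (Suc n)]) = (\<Sum>k<Suc (Suc n). T j k)"
    unfolding bdval_def bd_def T_def
    by (simp add: sum_set_upt_conv_sum_list_nat[symmetric] atLeast0LessThan o_def)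
  have Tdec: "T j k = (if k = j then vM j else 0) + (if k = Suc j then vM (Suc j) else 0)
      + (if k = 0 then (if 0 < j then T j 0 else 0) else 0) + (if k = Suc n then (if j < n then T j (Suc n) else 0) else 0)"
    if j: "j < Suc n" and k: "k < Suc (Suc n)" for j k
  proof -
    consider "k = j" | "k = Suc j" | "k = 0 \<and> 0 < j" | "k = Suc n \<and> j < n" | "0 < k \<and> k < j"
      | "Suc j < k \<and> k < Suc n" using j k by linarith
    then show ?thesis
    proof cases
      case 1
      have "T j k = vM j" unfolding T_def vM_def 1 using j
        by (subst faceT) (auto intro!: arg_cong[where f = val] simp: HH_def MM_def)
      then show ?thesis using 1 j by auto
    next
      case 2
      have "T j k = vM (Suc j)" unfolding T_def vM_def 2 using j
        by (subst faceT) (auto intro!: arg_cong[where f = val] simp: HH_def MM_def)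
      then show ?thesis using 2 j by auto
    next
      case 3 then show ?thesis using j by auto
    next
      case 4 then show ?thesis using j by auto
    next
      case 5
      have "degenerate (face k (map (HH j) [0..<Suc (Suc n)]))"
        using 5 j by (subst faceT) (auto intro!: degenerate_map_upt[of "k - 1"] simp: HH_def)
      then have "T j k = 0" unfolding T_def using k by (intro val_deg simpT) auto
      then show ?thesis using 5 by auto
    next
      case 6
      have "degenerate (face k (map (HH j) [0..<Suc (Suc n)]))"
        using 6 j by (subst faceT) (auto intro!: degenerate_map_upt[of "k - 1"] simp: HH_def)
      then have "T j k = 0" unfolding T_def using k by (intro val_deg simpT) auto
      then show ?thesis using 6 by auto
    qed
  qed
  have sumk: "(\<Sum>k<Suc (Suc n). T j k) = vM j + vM (Suc j) + (if 0 < j then T j 0 else 0)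
         + (if j < n then T j (Suc n) else 0)" if j: "j < Suc n" for j
  proof -
    have "(\<Sum>k<Suc (Suc n). T j k) = (\<Sum>k<Suc (Suc n). (if k = j then vM j else 0) + (if k = Suc j then vM (Suc j) else 0)
      + (if k = 0 then (if 0 < j then T j 0 else 0) else 0) + (if k = Suc n then (if j < n then T j (Suc n) else 0) else 0))"
      by (rule sum.cong[OF refl], rule Tdec[OF j], simp)
    also have "\<dots> = vM j + vM (Suc j) + (if 0 < j then T j 0 else 0) + (if j < n then T j (Suc n) else 0)"
      using j by (simp only: sum.distrib sum.delta finite_lessThan) simp
    finally show ?thesis .
  qed
  have pair: "T (Suc j) 0 = T j (Suc n)" if j: "j < n" for j
  proof -
    have "face 0 (map (HH (Suc j)) [0..<Suc (Suc n)]) = lmul (gel (True, True)) (map (HH j) [0..<Suc n])"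
      unfolding lmul_def using j
      by (subst faceT) (auto simp: HH_def tf_not[symmetric] gf_not[symmetric] not_le)
    moreover have "face (Suc n) (map (HH j) [0..<Suc (Suc n)]) = map (HH j) [0..<Suc n]"
      by (subst faceT) auto
    ultimately show ?thesis unfolding T_def
      by (simp add: val_lmul_gel is_simp_map_upt perm_HH)
  qed
  have "sum_list (map bdval (H1 (xt n))) = (\<Sum>j<Suc n. \<Sum>k<Suc (Suc n). T j k)"
    unfolding H1_xt by (simp add: bdv sum_set_upt_conv_sum_list_nat[symmetric] atLeast0LessThan o_def)
  also have "\<dots> = (\<Sum>j<Suc n. (vM j + vM (Suc j)) + ((if 0 < j then T j 0 else 0)
         + (if j < n then T j (Suc n) else 0)))"
    by (rule sum.cong[OF refl], subst sumk, simp, simp add: ac_simps)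
  also have "\<dots> = (vM 0 + vM (Suc n)) + ((\<Sum>j<n. T (Suc j) 0) + (\<Sum>j<n. T j (Suc n)))"
  proof -
    have a: "(\<Sum>j<Suc n. vM j + vM (Suc j)) = vM 0 + vM (Suc n)"
      by (rule telescope[OF c2])
    have b: "(\<Sum>j<Suc n. (if 0 < j then T j 0 else 0)) = (\<Sum>j<n. T (Suc j) 0)"
      by (subst sum.lessThan_Suc_shift) simp
    have c: "(\<Sum>j<Suc n. (if j < n then T j (Suc n) else 0)) = (\<Sum>j<n. T j (Suc n))"
      by (simp add: sum.lessThan_Suc)
    have a': "sum vM {..<Suc n} + (\<Sum>j<Suc n. vM (Suc j)) = vM 0 + vM (Suc n)"
      using a by (simp only: sum.distrib)
    show ?thesis by (simp only: sum.distrib a' b c)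
  qed
  also have "(\<Sum>j<n. T (Suc j) 0) = (\<Sum>j<n. T j (Suc n))"
    by (rule sum.cong) (simp_all add: pair)
  finally have main: "sum_list (map bdval (H1 (xt n))) = vM 0 + vM (Suc n)"
    by (simp add: c2)
  have "vM (Suc n) = val (map (\<lambda>p. pcomp t23 (fS p)) (xt n))"
    unfolding vM_def xt_PP PP_def MM_def
    by (simp add: o_def, intro arg_cong[where f = val] map_cong) (auto simp: tf_def)
  moreover have "vM 0 = V (replicate n (True, True))"
  proof -
    have "map (MM 0) [0..<Suc n] = map gel (zip (PP n) (PP n))"
      by (simp add: MM_def PP_def gf_gel zip_map_map[symmetric] zip_same_conv_map o_def)
    also have "\<dots> = gsimp (hd (PP n), hd (PP n)) (zip (bsteps (PP n)) (bsteps (PP n)))"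
      by (rule map_gel_zip) simp_all
    finally show ?thesis unfolding vM_def
      by (simp add: val_gsimp alt_bsteps[OF PP_alt] zip_replicate)
  qed
  ultimately show ?thesis using main by (simp add: ac_simps)
qed

end

declare upt_Suc[simp]

lemma degen_Cons0: "degen 0 (x # L) = x # x # L"
  by (simp add: degen_def)
lemma degen_ConsS: "degen (Suc j) (x # L) = x # degen j L"
  by (simp add: degen_def)

lemma hd_degen: "L \<noteq> [] \<Longrightarrow> hd (degen j L) = hd L"
  by (cases L) (simp_all add: degen_def)
lemma degen_ne: "L \<noteq> [] \<Longrightarrow> degen j L \<noteq> []"
  by (cases L) (simp_all add: degen_def)
lemma length_degen: "j < length L \<Longrightarrow> length (degen j L) = Suc (length L)"
  by (simp add: degen_def)

lemma bsteps_degen: "j < length L \<Longrightarrow> bsteps (degen j L) = take j (bsteps L) @ False # drop j (bsteps L)"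
proof (induct L arbitrary: j)
  case Nil then show ?case by simp
next
  case (Cons x L)
  show ?case
  proof (cases j)
    case 0 then show ?thesis by (simp add: degen_Cons0)
  next
    case (Suc j')
    then have j': "j' < length L" and ne: "L \<noteq> []" using Cons.prems by auto
    show ?thesis unfolding Suc degen_ConsS
      using Cons.hyps[OF j'] ne
      by (simp add: bsteps_Cons degen_ne hd_degen)
  qed
qed

lemma degens_snoc: "degens (js @ [j]) L = degen j (degens js L)"
  by (simp add: degens_def)
lemma degens_Nil[simp]: "degens [] L = L"
  by (simp add: degens_def)

lemma hd_degens: "L \<noteq> [] \<Longrightarrow> hd (degens js L) = hd L \<and> degens js L \<noteq> []"
  by (induct js rule: rev_induct) (simp_all add: degens_snoc hd_degen degen_ne)

lemma degen_map: "degen j (map f L) = map f (degen j L)"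
  by (simp add: degen_def take_map drop_map)
lemma degens_map: "degens js (map f L) = map f (degens js L)"
  by (induct js rule: rev_induct) (simp_all add: degens_snoc degen_map)

lemma length_bsteps_ne: "L \<noteq> [] \<Longrightarrow> length L = Suc (length (bsteps L))"
  by simp

lemma bsteps_degens:
  assumes "sorted_wrt (<) js" "\<forall>j\<in>set js. j < t + length js" "L \<noteq> []"
    "bsteps L = Pre @ replicate t True"
  shows "bsteps (degens (map (\<lambda>k. k + length Pre) js) L) = Pre @ map (\<lambda>r. r \<notin> set js) [0..<t + length js]
    \<and> length (degens (map (\<lambda>k. k + length Pre) js) L) = length L + length js"
  using assms(1,2)
proof (induct js rule: rev_induct)
  case Nil
  then show ?case using assms(4) by (simp add: map_replicate_const)
next
  case (snoc j js)
  have lt: "\<forall>x\<in>set js. x < j" using snoc.prems(1) by (simp add: sorted_wrt_append)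
  have jb: "j < Suc (t + length js)" using snoc.prems(2) by simp
  have IH: "bsteps (degens (map (\<lambda>k. k + length Pre) js) L) = Pre @ map (\<lambda>r. r \<notin> set js) [0..<t + length js]
    \<and> length (degens (map (\<lambda>k. k + length Pre) js) L) = length L + length js"
    apply (rule snoc.hyps)
    using snoc.prems(1) apply (simp add: sorted_wrt_append)
    using lt jb by fastforce
  define X where "X = degens (map (\<lambda>k. k + length Pre) js) L"
  define M where "M = map (\<lambda>r. r \<notin> set js) [0..<t + length js]"
  have lL: "length L = Suc (length Pre + t)" using assms(3,4) length_bsteps_ne[of L] by simp
  have lX: "length X = Suc (length Pre + t + length js)" using IH lL unfolding X_def by simp
  have jX: "j + length Pre < length X" using lX jb by simp
  have e: "degens (map (\<lambda>k. k + length Pre) (js @ [j])) L = degen (j + length Pre) X"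
    unfolding X_def by (simp add: degens_snoc)
  have "bsteps (degen (j + length Pre) X) = Pre @ (take j M @ False # drop j M)"
    using IH jX unfolding X_def[symmetric] M_def[symmetric]
    by (simp add: bsteps_degen)
  also have "take j M @ False # drop j M = map (\<lambda>r. r \<notin> set (js @ [j])) [0..<t + length (js @ [j])]"
  proof (rule nth_equalityI)
    show "length (take j M @ False # drop j M) = length (map (\<lambda>r. r \<notin> set (js @ [j])) [0..<t + length (js @ [j])])"
      using jb by (simp add: M_def)
    fix r assume r: "r < length (take j M @ False # drop j M)"
    then have r': "r < Suc (t + length js)" using jb by (simp add: M_def)
    consider "r < j" | "r = j" | "j < r" by linarith
    then show "(take j M @ False # drop j M) ! r = map (\<lambda>r. r \<notin> set (js @ [j])) [0..<t + length (js @ [j])] ! r"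
    proof cases
      case 1 then show ?thesis using jb r' by (simp add: nth_append M_def)
    next
      case 2 then show ?thesis using jb r' by (simp add: nth_append M_def)
    next
      case 3
      then have "(take j M @ False # drop j M) ! r = M ! (r - 1)"
        using jb r' by (simp add: nth_append M_def nth_Cons' min_def)
      also have "\<dots> = True" using 3 r' lt by (auto simp: M_def)
      moreover have "map (\<lambda>r. r \<notin> set (js @ [j])) [0..<t + length (js @ [j])] ! r = (r \<notin> set (js @ [j]))"
        using r' by (simp del: upt_Suc)
      ultimately show ?thesis using 3 r' lt by auto
    qed
  qed
  finally show ?case using e lX lL length_degen[OF jX] by simp
qed

definition wd :: "nat list \<Rightarrow> nat \<Rightarrow> word" where
  "wd al N = map (\<lambda>r. (r \<in> set al, r \<notin> set al)) [0..<N]"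

lemma subseqs_set: "al \<in> set (subseqs xs) \<Longrightarrow> set al \<subseteq> set xs"
  using subseqs_powset[of xs] by blast

lemma subseqs_sorted: "al \<in> set (subseqs xs) \<Longrightarrow> sorted_wrt R xs \<Longrightarrow> sorted_wrt R al"
proof (induct xs arbitrary: al)
  case Nil then show ?case by simp
next
  case (Cons x xs)
  show ?case
  proof (cases "al \<in> set (subseqs xs)")
    case True then show ?thesis using Cons by simp
  next
    case False
    then obtain al' where al: "al = x # al'" "al' \<in> set (subseqs xs)"
      using Cons.prems(1) by (auto simp: Let_def)
    then show ?thesis using Cons.hyps[of al'] Cons.prems(2) subseqs_set[OF al(2)] by auto
  qed
qed

lemma wd_allw_gen: "map (\<lambda>al. map (\<lambda>r. (r \<in> set al, r \<notin> set al)) [k..<k + N]) (subseqs [k..<k + N]) = allw N"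
proof (induct N arbitrary: k)
  case 0 then show ?case by simp
next
  case (Suc N)
  have e: "[k..<k + Suc N] = k # [Suc k..<Suc k + N]" by (simp add: upt_conv_Cons del: upt_Suc)
  have s: "\<And>al. al \<in> set (subseqs [Suc k..<Suc k + N]) \<Longrightarrow> set al \<subseteq> {Suc k..<Suc k + N}"
    using subseqs_set by fastforce
  have A: "map (\<lambda>al. map (\<lambda>r. (r \<in> set al, r \<notin> set al)) (k # [Suc k..<Suc k + N])) (map (Cons k) (subseqs [Suc k..<Suc k + N]))
     = map (Cons (True, False)) (map (\<lambda>al. map (\<lambda>r. (r \<in> set al, r \<notin> set al)) [Suc k..<Suc k + N]) (subseqs [Suc k..<Suc k + N]))"
    by (auto intro!: map_cong)
  have B: "map (\<lambda>al. map (\<lambda>r. (r \<in> set al, r \<notin> set al)) (k # [Suc k..<Suc k + N])) (subseqs [Suc k..<Suc k + N])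
     = map (Cons (False, True)) (map (\<lambda>al. map (\<lambda>r. (r \<in> set al, r \<notin> set al)) [Suc k..<Suc k + N]) (subseqs [Suc k..<Suc k + N]))"
    using s by (fastforce intro!: map_cong)
  show ?case unfolding e
    by (simp only: subseqs.simps Let_def map_append A B Suc allw.simps)
qed

lemma wd_allw: "map (\<lambda>al. wd al N) (subseqs [0..<N]) = allw N"
  using wd_allw_gen[of 0 N] by (simp add: wd_def)

lemma cnta_wd: "al \<in> set (subseqs [0..<N]) \<Longrightarrow> cnta (wd al N) = length al"
proof -
  assume al: "al \<in> set (subseqs [0..<N])"
  have d: "distinct al" by (rule subseqs_distinctD[OF al]) simp
  have s: "set al \<subseteq> {0..<N}" using subseqs_set[OF al] by simp
  have "cnta (wd al N) = length (filter (\<lambda>r. r \<in> set al) [0..<N])"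
    by (simp add: cnta_def wd_def filter_map o_def)
  also have "\<dots> = card (set (filter (\<lambda>r. r \<in> set al) [0..<N]))"
    by (rule distinct_card[symmetric]) simp
  also have "set (filter (\<lambda>r. r \<in> set al) [0..<N]) = set al" using s by auto
  also have "card (set al) = length al" by (rule distinct_card[OF d])
  finally show ?thesis .
qed

lemma kw_subseqs: "map (\<lambda>al. wd al N) (filter (\<lambda>al. length al = K) (subseqs [0..<N])) = kw K N"
proof -
  have "map (\<lambda>al. wd al N) (filter (\<lambda>al. length al = K) (subseqs [0..<N])) =
        map (\<lambda>al. wd al N) (filter ((\<lambda>w. cnta w = K) \<circ> (\<lambda>al. wd al N)) (subseqs [0..<N]))"
    by (rule arg_cong[where f = "map _"], rule filter_cong) (simp_all add: cnta_wd)
  also have "\<dots> = filter (\<lambda>w. cnta w = K) (map (\<lambda>al. wd al N) (subseqs [0..<N]))"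
    by (simp add: filter_map)
  finally show ?thesis by (simp add: wd_allw kw_def)
qed

lemma oddsum_gen:
  fixes G :: "word \<Rightarrow> 'a::ab_group_add" and f :: "word \<Rightarrow> nat" and N :: nat
  shows "(\<forall>w\<in>set X. f w \<le> N) \<Longrightarrow>
    (\<Sum>p<N. if even p then sv G (filter (\<lambda>w. f w = Suc p) X) else 0) = sv G (filter (\<lambda>w. odd (f w)) X)"
proof (induct X)
  case Nil then show ?case by (simp only: filter.simps sv_Nil if_cancel sum.neutral_const)
next
  case (Cons w X)
  have "(\<Sum>p<N. if even p then sv G (filter (\<lambda>u. f u = Suc p) (w # X)) else 0) =
        (\<Sum>p<N. (if even p \<and> f w = Suc p then G w else 0) + (if even p then sv G (filter (\<lambda>u. f u = Suc p) X) else 0))"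
    by (rule sum.cong) auto
  also have "\<dots> = (\<Sum>p<N. if even p \<and> f w = Suc p then G w else 0) + (\<Sum>p<N. if even p then sv G (filter (\<lambda>u. f u = Suc p) X) else 0)"
    by (rule sum.distrib)
  also have "(\<Sum>p<N. if even p \<and> f w = Suc p then G w else 0) = (if odd (f w) then G w else 0)"
  proof (cases "odd (f w)")
    case True
    then obtain p0 where p0: "f w = Suc p0" by (cases "f w") auto
    have "p0 < N" using Cons.prems p0 by auto
    have "(\<Sum>p<N. if even p \<and> f w = Suc p then G w else 0) = (\<Sum>p<N. if p0 = p then G w else 0)"
      by (rule sum.cong) (use True p0 in auto)
    also have "\<dots> = G w" using \<open>p0 < N\<close> by (subst sum.delta'[where b = "\<lambda>_. G w"]) auto
    finally show ?thesis using True by simp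
  next
    case False
    then show ?thesis by (auto intro!: sum.neutral)
  qed
  finally show ?case using Cons by simp
qed

lemma oddsum: "(\<Sum>p<N. if even p then sv G (kw (Suc p) N) else 0) = sv G (ow N)"
  unfolding kw_def ow_def by (rule oddsum_gen) (simp add: cnta_allw)

lemma regroup:
  fixes f :: "nat \<Rightarrow> nat \<Rightarrow> 'a::comm_monoid_add" and n :: nat
  shows "(\<Sum>q<n. \<Sum>p<n - q. f (p + q + 1) p) = (\<Sum>N\<in>{1..n}. \<Sum>p<N. f N p)"
proof (induct n)
  case 0 then show ?case by simp
next
  case (Suc n)
  have "(\<Sum>q<Suc n. \<Sum>p<Suc n - q. f (p + q + 1) p) = (\<Sum>q<Suc n. (\<Sum>p<n - q. f (p + q + 1) p) + f (Suc n) (n - q))"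
  proof (rule sum.cong[OF refl])
    fix q assume "q \<in> {..<Suc n}"
    then have q: "q \<le> n" by simp
    then have "Suc n - q = Suc (n - q)" by simp
    then show "(\<Sum>p<Suc n - q. f (p + q + 1) p) = (\<Sum>p<n - q. f (p + q + 1) p) + f (Suc n) (n - q)"
      using q by simp
  qed
  also have "\<dots> = (\<Sum>q<Suc n. \<Sum>p<n - q. f (p + q + 1) p) + (\<Sum>q<Suc n. f (Suc n) (n - q))"
    by (rule sum.distrib)
  also have "(\<Sum>q<Suc n. \<Sum>p<n - q. f (p + q + 1) p) = (\<Sum>q<n. \<Sum>p<n - q. f (p + q + 1) p)"
    by simp
  also have "(\<Sum>q<Suc n. f (Suc n) (n - q)) = (\<Sum>p<Suc n. f (Suc n) p)"
    using sum.nat_diff_reindex[of "f (Suc n)" "Suc n"] by simp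
  finally show ?case using Suc by (simp add: sum.cl_ivl_Suc)
qed

lemma SS_sum: "(\<Sum>N\<in>{1..n}. sv (\<lambda>w. F (replicate (n - N) (True, True) @ (False, True) # w)) (ow N)) = sv F (SS n)"
proof (induct n arbitrary: F)
  case 0 then show ?case by simp
next
  case (Suc n)
  have "(\<Sum>N\<in>{1..n}. sv (\<lambda>w. F (replicate (Suc n - N) (True, True) @ (False, True) # w)) (ow N)) =
        (\<Sum>N\<in>{1..n}. sv (\<lambda>w. F ((True, True) # replicate (n - N) (True, True) @ (False, True) # w)) (ow N))"
  proof (rule sum.cong[OF refl])
    fix N assume "N \<in> {1..n}"
    then have "Suc n - N = Suc (n - N)" by auto
    then show "sv (\<lambda>w. F (replicate (Suc n - N) (True, True) @ (False, True) # w)) (ow N) =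
        sv (\<lambda>w. F ((True, True) # replicate (n - N) (True, True) @ (False, True) # w)) (ow N)"
      by simp
  qed
  also have "\<dots> = sv (\<lambda>w. F ((True, True) # w)) (SS n)"
    by (rule Suc.hyps)
  finally show ?case by (simp add: sum.cl_ivl_Suc ac_simps)
qed

definition UA :: "nat \<Rightarrow> nat \<Rightarrow> nat \<Rightarrow> nat list \<Rightarrow> bool list" where
  "UA n q p al = degens (map (\<lambda>k. k + (n - p - q)) (filter (\<lambda>k. k \<notin> set al) [0..<p + q + 1]))
      (degen (n - p - q - 1) (take (n - q + 1) (PP n)))"
definition UB :: "nat \<Rightarrow> nat \<Rightarrow> nat \<Rightarrow> nat list \<Rightarrow> bool list" where
  "UB n q p al = degens (map (\<lambda>k. k + (n - p - q)) al) (take (n - p - q) (PP n) @ drop (n - q) (PP n))"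

lemma take_PP: "k \<le> n \<Longrightarrow> take (Suc k) (PP n) = PP k"
  by (simp add: PP_def take_map del: upt_Suc)

lemma bsteps_odd: "bsteps (map odd [k..<k + Suc m]) = replicate m True"
proof (induct m arbitrary: k)
  case 0 then show ?case by simp
next
  case (Suc m)
  have e: "[k..<k + Suc (Suc m)] = k # [Suc k..<Suc k + Suc m]"
    by (simp add: upt_conv_Cons del: upt_Suc)
  show ?case unfolding e using Suc[of "Suc k"]
    by (simp add: bsteps_Cons upt_conv_Cons del: upt_Suc)
qed

lemma bsteps_append: "X \<noteq> [] \<Longrightarrow> Y \<noteq> [] \<Longrightarrow> bsteps (X @ Y) = bsteps X @ (last X \<noteq> hd Y) # bsteps Y"
proof (induct X rule: bsteps.induct)
  case (1 x y r) then show ?case by simp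
next
  case ("2_1") then show ?case by simp
next
  case ("2_2" x) then show ?case by (cases Y) auto
qed

lemma PP_bsteps: "bsteps (PP k) = replicate k True"
  using alt_bsteps[OF PP_alt, of k] by simp

lemma entry_word:
  assumes q: "q < n" and p: "p < n - q" and al: "al \<in> set (subseqs [0..<p + q + 1])" and la: "length al = Suc p"
  shows "map gel (zip (UA n q p al) (UB n q p al)) =
     gsimp (False, False) (replicate (n - (p + q + 1)) (True, True) @ (False, even p) # wd al (p + q + 1))"
    and "length (UA n q p al) = Suc (Suc n)"
proof -
  define mb where "mb = n - p - q"
  define N where "N = p + q + 1"
  define be where "be = filter (\<lambda>k. k \<notin> set al) [0..<N]"
  have mb1: "1 \<le> mb" using p unfolding mb_def by simp
  have nq: "n - q = mb + p" using p q unfolding mb_def by simp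
  have sal: "sorted_wrt (<) al" by (rule subseqs_sorted[OF al]) (simp del: upt_Suc)
  have setal: "set al \<subseteq> {0..<N}" using subseqs_set[OF al] unfolding N_def by auto
  have dal: "distinct al" by (rule subseqs_distinctD[OF al]) simp
  have lbe: "length be = q"
  proof -
    have "length (filter (\<lambda>k. k \<in> set al) [0..<N]) = length al"
      using cnta_wd[OF al[folded N_def]] by (simp add: cnta_def wd_def filter_map o_def)
    moreover have "length (filter (\<lambda>k. k \<in> set al) [0..<N]) + length be = N"
      unfolding be_def using sum_length_filter_compl[of "\<lambda>k. k \<in> set al" "[0..<N]"] by simp
    ultimately show ?thesis using la unfolding N_def by simp
  qed
  have sbe: "sorted_wrt (<) be" unfolding be_def by (simp add: sorted_wrt_filter)
  have bbe0: "\<forall>j\<in>set be. j < N" unfolding be_def by auto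
  have bbe: "\<forall>j\<in>set be. j < Suc p + length be" using bbe0 lbe unfolding N_def by auto
  have bal: "\<forall>j\<in>set al. j < q + length al" using setal la unfolding N_def by auto
  define LA where "LA = degen (mb - 1) (take (n - q + 1) (PP n))"
  define PreA where "PreA = replicate (mb - 1) True @ [False]"
  have tA: "take (n - q + 1) (PP n) = PP (mb + p)" using take_PP[of "n - q" n] nq by simp
  have LAne: "LA \<noteq> []" unfolding LA_def tA by (simp add: degen_ne)
  have lLA: "length LA = Suc (Suc (mb + p))" unfolding LA_def tA using mb1 by (simp add: length_degen)
  have bLA: "bsteps LA = PreA @ replicate (Suc p) True"
  proof -
    have "bsteps LA = take (mb - 1) (replicate (mb + p) True) @ False # drop (mb - 1) (replicate (mb + p) True)"
      unfolding LA_def tA using mb1 by (simp add: bsteps_degen PP_bsteps)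
    also have "\<dots> = PreA @ replicate (Suc p) True"
      unfolding PreA_def using mb1 by (simp add: min_def Suc_diff_le)
    finally show ?thesis .
  qed
  have lPreA: "length PreA = mb" unfolding PreA_def using mb1 by simp
  have UAe: "UA n q p al = degens (map (\<lambda>k. k + length PreA) be) LA"
    unfolding UA_def LA_def be_def lPreA mb_def N_def by simp
  have A: "bsteps (UA n q p al) = PreA @ map (\<lambda>r. r \<notin> set be) [0..<Suc p + length be]
     \<and> length (UA n q p al) = length LA + length be"
    unfolding UAe by (rule bsteps_degens[OF sbe bbe LAne bLA])
  define LB where "LB = take mb (PP n) @ drop (n - q) (PP n)"
  define PreB where "PreB = replicate (mb - 1) True @ [even p]"
  have tB: "take mb (PP n) = PP (mb - 1)" using take_PP[of "mb - 1" n] mb1 nq q by simp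
  have dB: "drop (n - q) (PP n) = map odd [n - q..<n - q + Suc q]"
    using q by (simp add: PP_def drop_map del: upt_Suc)
  have LBne: "LB \<noteq> []" unfolding LB_def tB by simp
  have lLB: "length LB = mb + Suc q" unfolding LB_def tB dB using mb1 by simp
  have bLB: "bsteps LB = PreB @ replicate q True"
  proof -
    have l: "last (PP (mb - 1)) = odd (mb - 1)" by (simp add: PP_def del: upt_Suc) (simp add: last_map)
    have h: "hd (map odd [n - q..<n - q + Suc q]) = odd (n - q)" by (simp add: upt_conv_Cons del: upt_Suc)
    have par: "(odd (mb - 1) \<noteq> odd (n - q)) = even p" using nq mb1 by (cases mb) auto
    have "bsteps LB = bsteps (PP (mb - 1)) @ (last (PP (mb - 1)) \<noteq> hd (map odd [n - q..<n - q + Suc q]))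
          # bsteps (map odd [n - q..<n - q + Suc q])"
      unfolding LB_def tB dB by (rule bsteps_append) (simp_all del: upt_Suc)
    also have "\<dots> = PreB @ replicate q True"
      unfolding l h par PreB_def PP_bsteps bsteps_odd by simp
    finally show ?thesis .
  qed
  have lPreB: "length PreB = mb" unfolding PreB_def using mb1 by simp
  have UBe: "UB n q p al = degens (map (\<lambda>k. k + length PreB) al) LB"
    unfolding UB_def LB_def lPreB mb_def by simp
  have B: "bsteps (UB n q p al) = PreB @ map (\<lambda>r. r \<notin> set al) [0..<q + length al]
     \<and> length (UB n q p al) = length LB + length al"
    unfolding UBe by (rule bsteps_degens[OF sal bal LBne bLB])
  have lenA: "length (UA n q p al) = Suc (Suc n)" using A lLA lbe nq q p by simp
  then show "length (UA n q p al) = Suc (Suc n)" .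
  have lenB: "length (UB n q p al) = Suc (Suc n)" using B lLB la nq q p by simp
  have hA: "hd (UA n q p al) = False"
    using hd_degens[OF LAne] UAe unfolding LA_def tA by (simp add: hd_degen PP_def upt_conv_Cons del: upt_Suc)
  have hB: "hd (UB n q p al) = False"
    using hd_degens[OF LBne] UBe unfolding LB_def tB by (simp add: PP_def upt_conv_Cons del: upt_Suc)
  have UAne: "UA n q p al \<noteq> []" using lenA by auto
  have mbN: "mb - 1 = n - (p + q + 1)" unfolding mb_def by simp
  have zz: "zip (bsteps (UA n q p al)) (bsteps (UB n q p al)) =
     replicate (n - (p + q + 1)) (True, True) @ (False, even p) # wd al (p + q + 1)"
  proof -
    have r1: "[0..<Suc p + length be] = [0..<N]" "[0..<q + length al] = [0..<N]"
      using lbe la unfolding N_def by (simp_all add: add.commute del: upt_Suc)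
    have "zip (bsteps (UA n q p al)) (bsteps (UB n q p al)) =
          zip PreA PreB @ zip (map (\<lambda>r. r \<notin> set be) [0..<N]) (map (\<lambda>r. r \<notin> set al) [0..<N])"
      using A B r1 lPreA lPreB by (simp del: upt_Suc)
    also have "zip PreA PreB = replicate (mb - 1) (True, True) @ [(False, even p)]"
      unfolding PreA_def PreB_def by (simp add: zip_replicate)
    also have "zip (map (\<lambda>r. r \<notin> set be) [0..<N]) (map (\<lambda>r. r \<notin> set al) [0..<N]) = wd al N"
      unfolding wd_def zip_map_map zip_same_conv_map be_def by (auto simp: o_def)
    finally show ?thesis unfolding mbN N_def by simp
  qed
  show "map gel (zip (UA n q p al) (UB n q p al)) =
     gsimp (False, False) (replicate (n - (p + q + 1)) (True, True) @ (False, even p) # wd al (p + q + 1))"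
    using map_gel_zip[of "UA n q p al" "UB n q p al"] lenA lenB UAne hA hB zz by simp
qed

lemma degens_map2: "degens js (map f X @ map f Y) = map f (degens js (X @ Y))"
  by (simp add: degens_map[symmetric])

lemma shi_map: "shi (map f a, map f b) = map (\<lambda>(u, v). (map f u, map f v)) (shi (a, b))"
  by (simp add: shi_def Let_def map_concat take_map drop_map degens_map degen_map degens_map2 o_def del: upt_Suc)

lemma shi_PP: "shi (PP n, PP n) = concat (map (\<lambda>q. concat (map (\<lambda>p. map (\<lambda>al. (UA n q p al, UB n q p al))
      (filter (\<lambda>al. length al = p + 1) (subseqs [0..<p + q + 1]))) [0..<n - q])) [0..<n])"
  by (simp add: shi_def Let_def UA_def UB_def)

lemma zip_rep_map: "zip (replicate (length u) c) (zip (map f u) (map g v)) = map (\<lambda>(x, y). (c, (f x, g y))) (zip u v)"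
proof (induct u arbitrary: v)
  case Nil then show ?case by simp
next
  case (Cons x u) then show ?case by (cases v) auto
qed

lemma H2_xt: "H2 (xt n) = map (\<lambda>(u, v). map gel (zip u v)) (shi (PP n, PP n))"
proof -
  have pg': "\<And>x y. perm_gamma [0, Suc 0] [bperm x, bperm y] = gel (x, y)"
    by (simp add: perm_gamma_def bperm_def gel_def)
  show ?thesis
    unfolding H2_def xt_PP shi_map
    by (simp add: zip_rep_map o_def split_def pg' cong: map_cong)
qed

lemma sum_list_concat_map: "sum_list (map F (concat (map G xs))) = sum_list (map (\<lambda>x. sum_list (map F (G x))) xs)"
  by (induct xs) simp_all

lemma sum_list_upt_sum: "sum_list (map f [0..<n]) = (\<Sum>k<n. f k)"
  by (simp add: sum_set_upt_conv_sum_list_nat[symmetric] atLeast0LessThan)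

lemma H2_simp: "s \<in> set (H2 (xt n)) \<Longrightarrow> is_simp 4 s"
  unfolding H2_xt shi_PP using entry_word(1) is_simp_gsimp
  by (auto simp del: upt_Suc)

lemma H1_simp: "s \<in> set (H1 (xt n)) \<Longrightarrow> is_simp 4 s"
  unfolding H1_xt by (auto intro!: is_simp_map_upt perm_HH simp del: upt_Suc)

context ealg
begin

lemma P3: "sum_list (map bdval (H2 (xt n))) = V (replicate n (True, True)) + sv V (allw n)"
proof -
  define f where "f N p = (if even p then sv (\<lambda>w. dV V (replicate (n - N) (True, True) @ (False, True) # w)) (kw (Suc p) N) else 0)" for N p
  have entry: "bdval (map gel (zip (UA n q p al) (UB n q p al))) =
      (if even p then dV V (replicate (n - (p + q + 1)) (True, True) @ (False, True) # wd al (p + q + 1)) else 0)"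
    if "q < n" "p < n - q" "al \<in> set (subseqs [0..<p + q + 1])" "length al = Suc p" for q p al
  proof (cases "even p")
    case True then show ?thesis using entry_word(1)[OF that] by (simp add: bdval_gsimp)
  next
    case False
    then show ?thesis using entry_word(1)[OF that]
      by (simp add: bdval_deg is_simp_gsimp degenerate_gsimp)
  qed
  have inner: "sum_list (map (\<lambda>al. bdval (map gel (zip (UA n q p al) (UB n q p al))))
        (filter (\<lambda>al. length al = p + 1) (subseqs [0..<p + q + 1]))) = f (p + q + 1) p"
    if "q < n" "p < n - q" for q p
  proof -
    have "sum_list (map (\<lambda>al. bdval (map gel (zip (UA n q p al) (UB n q p al))))
        (filter (\<lambda>al. length al = p + 1) (subseqs [0..<p + q + 1]))) =
      sum_list (map (\<lambda>al. if even p then dV V (replicate (n - (p + q + 1)) (True, True) @ (False, True) # wd al (p + q + 1)) else 0)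
        (filter (\<lambda>al. length al = p + 1) (subseqs [0..<p + q + 1])))"
      by (rule arg_cong[where f = sum_list], rule map_cong[OF refl], rule entry[OF that]) auto
    also have "\<dots> = f (p + q + 1) p"
    proof (cases "even p")
      case True
      have "sv (\<lambda>w. dV V (replicate (n - (p + q + 1)) (True, True) @ (False, True) # w)) (kw (Suc p) (p + q + 1))
         = sv (\<lambda>w. dV V (replicate (n - (p + q + 1)) (True, True) @ (False, True) # w))
             (map (\<lambda>al. wd al (p + q + 1)) (filter (\<lambda>al. length al = Suc p) (subseqs [0..<p + q + 1])))"
        by (simp only: kw_subseqs)
      then show ?thesis using True unfolding f_def by (simp add: sv_def o_def)
    next
      case False
      then show ?thesis unfolding f_def by (simp add: sum_list_map_filter')
    qed
    finally show ?thesis .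
  qed
  have "sum_list (map bdval (H2 (xt n))) = (\<Sum>q<n. \<Sum>p<n - q. f (p + q + 1) p)"
    unfolding H2_xt shi_PP
    apply (simp only: map_map o_def sum_list_concat_map sum_list_upt_sum)
    apply (rule sum.cong[OF refl], rule sum.cong[OF refl])
    apply (simp only: split_def fst_conv snd_conv)
    apply (rule inner; simp)
    done
  also have "\<dots> = (\<Sum>N\<in>{1..n}. \<Sum>p<N. f N p)" by (rule regroup)
  also have "\<dots> = (\<Sum>N\<in>{1..n}. sv (\<lambda>w. dV V (replicate (n - N) (True, True) @ (False, True) # w)) (ow N))"
    unfolding f_def by (rule sum.cong[OF refl], rule oddsum)
  also have "\<dots> = sv (dV V) (SS n)" by (rule SS_sum)
  also have "\<dots> = V (replicate n (True, True)) + sv V (allw n)" by (rule claim2[OF c2 zvV])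
  finally show ?thesis .
qed

lemma main: "homd d (zeta_op act i) [\<alpha>, \<alpha>, \<beta>, \<beta>] =
           cup act i (cup act 0 \<alpha> \<beta>) (cup act 0 \<alpha> \<beta>)
           + (\<Sum>j\<le>i. cup act 0 (cup act j \<alpha> \<alpha>) (cup act (i - j) \<beta> \<beta>))"
proof -
  have "homd d (zeta_op act i) [\<alpha>, \<alpha>, \<beta>, \<beta>] = sum_list (map bdval (H1 (xt i) @ H2 (xt i)))"
    unfolding zeta_op_def by (rule homd_actC) (auto dest: H1_simp H2_simp)
  also have "\<dots> = val (map (\<lambda>p. pcomp t23 (fS p)) (xt i)) + sv V (allw i)"
    by (simp add: P2 P3 ac_simps c2b)
  finally show ?thesis by (simp add: P4 P5sum)
qed

end

theorem mainTheorem3: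
  fixes d :: "'a::ab_group_add \<Rightarrow> 'a" and act :: "simp \<Rightarrow> 'a list \<Rightarrow> 'a"
    and i :: nat and \<alpha> \<beta> :: 'a
  assumes "E_algebra d act"
  shows "homd d (zeta_op act i) [\<alpha>, \<alpha>, \<beta>, \<beta>] =
           cup act i (cup act 0 \<alpha> \<beta>) (cup act 0 \<alpha> \<beta>)
           + (\<Sum>j\<le>i. cup act 0 (cup act j \<alpha> \<alpha>) (cup act (i - j) \<beta> \<beta>))"
proof -
  interpret ealg d act \<alpha> \<beta> by (rule ealg.intro[OF assms])
  show ?thesis by (rule main)
qed

end
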